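(* Let $N\geq 3$. Let $p\in C^{0,\alpha}_{\rm loc}(\mathbb{R}^N)$ (for some $0<\alpha<1$) be non-negative, and let $f:[0,\infty)\to[0,\infty)$ be a non-decreasing function with $f\in C^{0,\alpha}_{\rm loc}[0,\infty)$, $f(0)=0$, $f>0$ on $(0,\infty)$, and $\Lambda:=\sup_{s\geq 1} f(s)/s<\infty$. For $r\geq0$ set $\varphi(r)=\max_{|x|=r}p(x)$, $\psi(r)=\min_{|x|=r}p(x)$, $h(r)=\varphi(r)-\psi(r)$, $\Lambda_N=\Lambda/(N-2)$ and $\Psi(r)=\exp\left(\Lambda_N\int_0^r s\psi(s)\,ds\right)$. Assume $$\int_0^\infty r\,h(r)\,\Psi(r)\,dr<\infty\qquad\text{and}\qquad \int_1^\infty e^{-t}t^{1-N}\int_0^t e^s s^{N-1}\psi(s)\,ds\,dt=\infty.$$ Then the equations $$\Delta v+|\nabla v|=\varphi(|x|)f(v)\quad\text{and}\quad \Delta w+|\nabla w|=\psi(|x|)f(w)\qquad\text{in }\mathbb{R}^N$$ have positive entire large solutions $v$ and $w$, respectively (i.e. positive solutions on $\mathbb{R}^N$ tending to $\infty$ as $|x|\to\infty$), such that $v\leq w$ in $\mathbb{R}^N$.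
   Context: An entire large solution is a solution defined on all of $\mathbb{R}^N$ with $u(x)\to\infty$ as $|x|\to\infty$. *)

theory Defs
  imports "HOL-Analysis.Analysis"
begin

definition loc_holder_on :: "real \<Rightarrow> ('a::metric_space) set \<Rightarrow> ('a \<Rightarrow> real) \<Rightarrow> bool" where
  "loc_holder_on \<alpha> S g \<longleftrightarrow>
     (\<forall>K. compact K \<and> K \<subseteq> S \<longrightarrow>
        (\<exists>C. \<forall>x\<in>K. \<forall>y\<in>K. \<bar>g x - g y\<bar> \<le> C * dist x y powr \<alpha>))"

text \<open>u is a classical (C^2) solution on all of the space of
  Delta u + |grad u| = q(|x|) F(u): g is the gradient of u, H x the second
  (Frechet) derivative at x, continuous, and the Laplacian is its trace.\<close>
definition entire_classical_solution ::
  "(real \<Rightarrow> real) \<Rightarrow> (real \<Rightarrow> real) \<Rightarrow> ('a::euclidean_space \<Rightarrow> real) \<Rightarrow> bool" where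
  "entire_classical_solution q F u \<longleftrightarrow>
     (\<exists>g H. (\<forall>x. (u has_derivative (\<lambda>h. g x \<bullet> h)) (at x))
          \<and> (\<forall>x. (g has_derivative H x) (at x))
          \<and> (\<forall>b\<in>Basis. continuous_on UNIV (\<lambda>x. H x b))
          \<and> (\<forall>x. (\<Sum>b\<in>Basis. H x b \<bullet> b) + norm (g x) = q (norm x) * F (u x)))"

definition large :: "('a::real_normed_vector \<Rightarrow> real) \<Rightarrow> bool" where
  "large u \<longleftrightarrow> filterlim u at_top at_infinity"

end

theory Submission
  imports Defs "HOL-Analysis.Analysis"
begin

lemma cont_on_ge0:
  fixes u :: "real \<Rightarrow> real"
  assumes "\<And>R. R > 0 \<Longrightarrow> continuous_on {0..R} u"
  shows "continuous_on {0..} u"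
  unfolding continuous_on_eq_continuous_within
proof
  fix x :: real assume x: "x \<in> {0..}"
  have c: "continuous (at x within {0..x+1}) u"
    using assms[of "x+1"] x by (simp add: continuous_on_eq_continuous_within)
  have "at x within {0..} = at x within {0..x+1}"
    by (rule at_within_nhd[where S="{..<x+1}"]) auto
  then show "continuous (at x within {0..}) u" using c by simp
qed

lemma ftc_at:
  fixes g :: "real \<Rightarrow> real"
  assumes "continuous_on {0..} g" "t > 0"
  shows "((\<lambda>u. integral {0..u} g) has_real_derivative g t) (at t)"
proof -
  have sub: "{0..t+1} \<subseteq> {0..}" by auto
  have c: "continuous_on {0..t+1} g" by (rule continuous_on_subset[OF assms(1) sub])
  have tin: "t \<in> {0..t+1}" using assms(2) by simp
  have d: "((\<lambda>u. integral {0..u} g) has_real_derivative g t) (at t within {0..t+1})"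
    by (rule integral_has_real_derivative[OF c tin])
  have "t \<in> interior {0..t+1}" using assms(2) by simp
  then have "at t within {0..t+1} = at t" by (rule at_within_interior)
  then show ?thesis using d by simp
qed

definition mm :: "nat \<Rightarrow> real \<Rightarrow> real" where "mm n s = exp s * s ^ (n - 1)"
definition Aint :: "nat \<Rightarrow> (real \<Rightarrow> real) \<Rightarrow> real \<Rightarrow> real" where
  "Aint n g t = integral {0..t} (\<lambda>s. mm n s * g s)"
definition Gf :: "nat \<Rightarrow> (real \<Rightarrow> real) \<Rightarrow> real \<Rightarrow> real" where
  "Gf n g t = Aint n g t / mm n t"

lemma mm_cont: "continuous_on S (mm n)"
  unfolding mm_def by (intro continuous_intros)

lemma mm_pos: "t > 0 \<Longrightarrow> mm n t > 0"
  unfolding mm_def by simp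

lemma mm_nonneg: "t \<ge> 0 \<Longrightarrow> mm n t \<ge> 0"
  unfolding mm_def by simp

lemma mm_mono: "0 \<le> s \<Longrightarrow> s \<le> t \<Longrightarrow> mm n s \<le> mm n t"
  unfolding mm_def by (intro mult_mono power_mono) auto

lemma mm_deriv:
  assumes "n \<ge> 2" "t > 0"
  shows "(mm n has_real_derivative mm n t * (1 + (real n - 1) / t)) (at t)"
proof -
  obtain k where k: "n = Suc (Suc k)" using assms(1) by (metis add_2_eq_Suc le_Suc_ex)
  have d: "(mm n has_real_derivative exp t * t ^ Suc k + exp t * (real (Suc k) * t ^ k)) (at t)"
  proof -
    have p: "((\<lambda>s. s ^ Suc k) has_real_derivative real (Suc k) * t ^ k) (at t)"
      using DERIV_pow[of "Suc k" t] by simp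
    show ?thesis unfolding mm_def k diff_Suc_1
      by (rule DERIV_cong[OF DERIV_mult[OF DERIV_exp p]]) simp
  qed
  have "exp t * t ^ (Suc (Suc k) - 1) * (1 + (real (Suc (Suc k)) - 1) / t) = exp t * (t * t ^ k) * (1 + (1 + real k) / t)"
    by simp
  also have "\<dots> = exp t * (t * t ^ k) + exp t * ((1 + real k) * t ^ k)"
    using assms(2) by (simp add: field_simps)
  finally have "exp t * t ^ Suc k + exp t * (real (Suc k) * t ^ k) = mm n t * (1 + (real n - 1) / t)"
    unfolding mm_def k by simp
  then show ?thesis using d by simp
qed

lemma Aint_deriv:
  assumes "continuous_on {0..} g" "t > 0"
  shows "(Aint n g has_real_derivative mm n t * g t) (at t)"
  unfolding Aint_def
  by (rule ftc_at[OF _ assms(2)]) (intro continuous_intros mm_cont assms(1))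

lemma Gf_deriv:
  assumes "n \<ge> 2" "continuous_on {0..} g" "t > 0"
  shows "(Gf n g has_real_derivative (g t - Gf n g t * (1 + (real n - 1) / t))) (at t)"
proof -
  have "(Gf n g has_real_derivative (mm n t * g t * mm n t - Aint n g t * (mm n t * (1 + (real n - 1) / t))) / (mm n t * mm n t)) (at t)"
    unfolding Gf_def[abs_def]
    by (rule DERIV_divide[OF Aint_deriv[OF assms(2,3)] mm_deriv[OF assms(1,3)]])
       (use mm_pos[OF assms(3), of n] in simp)
  moreover have "(mm n t * g t * mm n t - Aint n g t * (mm n t * (1 + (real n - 1) / t))) / (mm n t * mm n t)
      = g t - Gf n g t * (1 + (real n - 1) / t)"
    using mm_pos[OF assms(3), of n] unfolding Gf_def by (simp add: field_simps)
  ultimately show ?thesis by simp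
qed

lemma Aint_nonneg:
  assumes "continuous_on {0..} g" "\<And>s. s \<ge> 0 \<Longrightarrow> g s \<ge> 0" "t \<ge> 0"
  shows "Aint n g t \<ge> 0"
  unfolding Aint_def
  by (rule integral_nonneg) (auto intro!: integrable_continuous_real continuous_intros mm_cont
        continuous_on_subset[OF assms(1)] mm_nonneg assms(2) mult_nonneg_nonneg)

lemma Gf_nonneg:
  assumes "continuous_on {0..} g" "\<And>s. s \<ge> 0 \<Longrightarrow> g s \<ge> 0" "t \<ge> 0"
  shows "Gf n g t \<ge> 0"
  unfolding Gf_def using Aint_nonneg[OF assms] mm_nonneg[OF assms(3)] by simp

lemma Gf_bound:
  assumes "continuous_on {0..} g" "\<And>s. s \<ge> 0 \<Longrightarrow> g s \<ge> 0" "t \<ge> 0"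
    and M: "\<And>s. 0 \<le> s \<Longrightarrow> s \<le> t \<Longrightarrow> g s \<le> M"
  shows "Gf n g t \<le> t * M"
proof (cases "t = 0")
  case True then show ?thesis by (simp add: Gf_def Aint_def)
next
  case False
  then have t: "t > 0" using assms(3) by simp
  have "Aint n g t \<le> integral {0..t} (\<lambda>s. mm n t * M)"
    unfolding Aint_def
  proof (rule integral_le)
    show "(\<lambda>s. mm n s * g s) integrable_on {0..t}"
      by (auto intro!: integrable_continuous_real continuous_intros mm_cont
        continuous_on_subset[OF assms(1)])
    fix s assume s: "s \<in> {0..t}"
    show "mm n s * g s \<le> mm n t * M"
      using s by (intro mult_mono mm_mono assms(2) M mm_nonneg) (auto intro: order_trans[OF assms(2) M])
  qed auto
  also have "\<dots> = t * mm n t * M" using t by simp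
  finally have "Aint n g t / mm n t \<le> (t * mm n t * M) / mm n t"
    using mm_pos[OF t, of n] by (intro divide_right_mono) auto
  also have "\<dots> = t * M" using mm_pos[OF t, of n] by simp
  finally show ?thesis unfolding Gf_def .
qed

lemma Gf_cont:
  assumes n: "n \<ge> 2" and g: "continuous_on {0..} g" "\<And>s. s \<ge> 0 \<Longrightarrow> g s \<ge> 0"
  shows "continuous_on {0..} (Gf n g)"
  unfolding continuous_on_eq_continuous_within
proof
  fix x :: real assume x: "x \<in> {0..}"
  show "continuous (at x within {0..}) (Gf n g)"
  proof (cases "x = 0")
    case False
    then have "x > 0" using x by simp
    then have "isCont (Gf n g) x" using Gf_deriv[OF n g(1)] DERIV_isCont by blast
    then show ?thesis using continuous_at_imp_continuous_at_within by blast
  next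
    case True
    have "bounded (g ` {0..1})"
      by (rule compact_imp_bounded[OF compact_continuous_image]) (auto intro: continuous_on_subset[OF g(1)])
    then have "bdd_above (g ` {0..1})" by (rule bounded_imp_bdd_above)
    then obtain M where M: "\<And>s. s \<in> {0..1} \<Longrightarrow> g s \<le> M"
      unfolding bdd_above_def by fastforce
    have ev: "eventually (\<lambda>t. Gf n g t \<le> t * M) (at 0 within {0..})"
      unfolding eventually_at
    proof (intro exI[of _ 1] conjI ballI impI)
      fix t :: real assume "t \<in> {0..}" "t \<noteq> 0 \<and> dist t 0 < 1"
      then have t: "0 \<le> t" "t \<le> 1" by (auto simp: dist_real_def)
      show "Gf n g t \<le> t * M"
        by (rule Gf_bound[OF g t(1)]) (use t M in auto)
    qed simp
    have ev0: "eventually (\<lambda>t. 0 \<le> Gf n g t) (at 0 within {0..})"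
      unfolding eventually_at_filter by (rule always_eventually) (auto intro!: Gf_nonneg[OF g])
    have "((\<lambda>t. t * M) \<longlongrightarrow> 0 * M) (at 0 within {0..})"
      by (intro tendsto_intros)
    then have lim: "((\<lambda>t. t * M) \<longlongrightarrow> 0) (at 0 within {0..})" by simp
    have "(Gf n g \<longlongrightarrow> 0) (at 0 within {0..})"
      by (rule tendsto_sandwich[OF ev0 ev]) (auto intro: lim)
    moreover have "Gf n g 0 = 0" by (simp add: Gf_def Aint_def)
    ultimately show ?thesis using True by (simp add: continuous_within)
  qed
qed

lemma green:
  assumes n: "n \<ge> 3" and g: "continuous_on {0..} g" "\<And>s. s \<ge> 0 \<Longrightarrow> g s \<ge> 0" and r: "r \<ge> 0"
  shows "integral {0..r} (Gf n g) \<le> integral {0..r} (\<lambda>s. s * g s) / (real n - 2)"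
proof -
  define c where "c = real n - 2"
  have c: "c > 0" using n unfolding c_def by simp
  have n2: "n \<ge> 2" using n by simp
  define \<Phi> where "\<Phi> x = integral {0..x} (Gf n g) + x * Gf n g x / c - integral {0..x} (\<lambda>s. s * g s) / c" for x
  have Gc: "continuous_on {0..} (Gf n g)" by (rule Gf_cont[OF n2 g])
  have sgc: "continuous_on {0..} (\<lambda>s. s * g s)" by (intro continuous_intros g(1))
  have cont: "continuous_on {0..r} \<Phi>"
  proof -
    have sub: "{0..r} \<subseteq> {0..}" by auto
    have i1: "continuous_on {0..r} (\<lambda>x. integral {0..x} (Gf n g))"
      by (rule indefinite_integral_continuous_1[OF integrable_continuous_real[OF continuous_on_subset[OF Gc sub]]])
    have i2: "continuous_on {0..r} (\<lambda>x. integral {0..x} (\<lambda>s. s * g s))"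
      by (rule indefinite_integral_continuous_1[OF integrable_continuous_real[OF continuous_on_subset[OF sgc sub]]])
    have i3: "continuous_on {0..r} (Gf n g)" by (rule continuous_on_subset[OF Gc sub])
    show ?thesis unfolding \<Phi>_def
      by (intro continuous_intros i1 i2 i3) (use c in auto)
  qed
  have der: "\<exists>y. DERIV \<Phi> x :> y \<and> y \<le> 0" if x: "0 < x" "x < r" for x
  proof -
    have d1: "((\<lambda>u. integral {0..u} (Gf n g)) has_real_derivative Gf n g x) (at x)"
      by (rule ftc_at[OF Gc x(1)])
    have d3: "((\<lambda>u. integral {0..u} (\<lambda>s. s * g s)) has_real_derivative x * g x) (at x)"
      by (rule ftc_at[OF sgc x(1)])
    have d2: "((\<lambda>u. u * Gf n g u) has_real_derivative
        1 * Gf n g x + (g x - Gf n g x * (1 + (real n - 1) / x)) * x) (at x)"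
      by (rule DERIV_mult[OF DERIV_ident Gf_deriv[OF n2 g(1) x(1)]])
    have "DERIV \<Phi> x :> Gf n g x + (1 * Gf n g x + (g x - Gf n g x * (1 + (real n - 1) / x)) * x) / c
        - x * g x / c"
      unfolding \<Phi>_def[abs_def]
      by (intro DERIV_diff DERIV_add DERIV_cdivide d1 d2 d3)
    moreover have "Gf n g x + (1 * Gf n g x + (g x - Gf n g x * (1 + (real n - 1) / x)) * x) / c
        - x * g x / c = - (x * Gf n g x) / c"
    proof -
      have cn: "real n - 1 = c + 1" unfolding c_def by simp
      show ?thesis unfolding cn using c x by (simp add: field_simps)
    qed
    moreover have "- (x * Gf n g x) / c \<le> 0"
      using Gf_nonneg[OF g, of x n] x c by simp
    ultimately show ?thesis by auto
  qed
  have "\<Phi> r \<le> \<Phi> 0" by (rule DERIV_nonpos_imp_decreasing_open[OF r der cont])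
  moreover have "\<Phi> 0 = 0" unfolding \<Phi>_def by simp
  moreover have "r * Gf n g r / c \<ge> 0" using Gf_nonneg[OF g r, of n] r c by simp
  ultimately show ?thesis unfolding \<Phi>_def c_def by simp
qed

lemma Aint_mono:
  assumes "continuous_on {0..} g1" "continuous_on {0..} g2" "\<And>s. s \<ge> 0 \<Longrightarrow> g1 s \<le> g2 s" "t \<ge> 0"
  shows "Aint n g1 t \<le> Aint n g2 t"
  unfolding Aint_def
proof (rule integral_le)
  show "(\<lambda>s. mm n s * g1 s) integrable_on {0..t}"
    by (auto intro!: integrable_continuous_real continuous_intros mm_cont continuous_on_subset[OF assms(1)])
  show "(\<lambda>s. mm n s * g2 s) integrable_on {0..t}"
    by (auto intro!: integrable_continuous_real continuous_intros mm_cont continuous_on_subset[OF assms(2)])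
  fix s assume "s \<in> {0..t}"
  then show "mm n s * g1 s \<le> mm n s * g2 s"
    by (intro mult_left_mono assms(3) mm_nonneg) auto
qed

lemma Gf_mono:
  assumes "continuous_on {0..} g1" "continuous_on {0..} g2" "\<And>s. s \<ge> 0 \<Longrightarrow> g1 s \<le> g2 s" "t \<ge> 0"
  shows "Gf n g1 t \<le> Gf n g2 t"
  unfolding Gf_def by (rule divide_right_mono[OF Aint_mono[OF assms] mm_nonneg[OF assms(4)]])

lemma integrable_ge0:
  fixes g :: "real \<Rightarrow> real"
  shows "continuous_on {0..} g \<Longrightarrow> g integrable_on {0..r}"
  by (rule integrable_continuous_real) (erule continuous_on_subset, auto)

locale odeP =
  fixes n :: nat and P F :: "real \<Rightarrow> real" and Lam a :: real
  assumes n3: "n \<ge> 3" and Pc: "continuous_on {0..} P" and Pnn: "\<And>s. s \<ge> 0 \<Longrightarrow> P s \<ge> 0"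
    and Fc: "continuous_on {0..} F" and Fm: "mono_on {0..} F" and Fnn: "\<And>s. s \<ge> 0 \<Longrightarrow> F s \<ge> 0"
    and Flin: "\<And>s. s \<ge> 1 \<Longrightarrow> F s \<le> Lam * s" and Lam: "Lam \<ge> 0" and a: "a \<ge> 1"

context odeP
begin

definition Top :: "(real \<Rightarrow> real) \<Rightarrow> real \<Rightarrow> real" where
  "Top u r = a + integral {0..r} (Gf n (\<lambda>s. P s * F (u s)))"

definition Bd :: "real \<Rightarrow> real" where
  "Bd r = a * exp (Lam / (real n - 2) * integral {0..r} (\<lambda>s. s * P s))"

definition Inv :: "(real \<Rightarrow> real) \<Rightarrow> bool" where
  "Inv u \<longleftrightarrow> continuous_on {0..} u \<and> (\<forall>r\<ge>0. a \<le> u r \<and> u r \<le> Bd r)"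

lemma n2: "n \<ge> 2" using n3 by simp

lemma gcont:
  assumes "continuous_on {0..} u" "\<And>r. r \<ge> 0 \<Longrightarrow> u r \<ge> 0"
  shows "continuous_on {0..} (\<lambda>s. P s * F (u s))"
proof -
  have "continuous_on {0..} (\<lambda>s. F (u s))"
    by (rule continuous_on_compose2[OF Fc assms(1)]) (use assms(2) in auto)
  then show ?thesis by (intro continuous_intros Pc)
qed

lemma gnn: "(\<And>r. r \<ge> 0 \<Longrightarrow> u r \<ge> 0) \<Longrightarrow> s \<ge> 0 \<Longrightarrow> P s * F (u s) \<ge> 0"
  by (intro mult_nonneg_nonneg Pnn Fnn) auto

lemma sPc: "continuous_on {0..} (\<lambda>s. s * P s)" by (intro continuous_intros Pc)

lemma Bd_cont: "continuous_on {0..} Bd"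
proof (rule cont_on_ge0)
  fix R :: real assume "R > 0"
  have "continuous_on {0..R} (\<lambda>r. integral {0..r} (\<lambda>s. s * P s))"
    by (rule indefinite_integral_continuous_1[OF integrable_ge0[OF sPc]])
  then show "continuous_on {0..R} Bd" unfolding Bd_def by (intro continuous_intros)
qed

lemma Bd_ge: "r \<ge> 0 \<Longrightarrow> Bd r \<ge> a"
proof -
  assume r: "r \<ge> 0"
  have "integral {0..r} (\<lambda>s. s * P s) \<ge> 0"
    by (rule integral_nonneg[OF integrable_ge0[OF sPc]]) (auto intro!: mult_nonneg_nonneg Pnn)
  moreover have "Lam / (real n - 2) \<ge> 0" using Lam n3 by simp
  ultimately have "Lam / (real n - 2) * integral {0..r} (\<lambda>s. s * P s) \<ge> 0" by (rule mult_nonneg_nonneg[rotated])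
  then have "exp (Lam / (real n - 2) * integral {0..r} (\<lambda>s. s * P s)) \<ge> 1" by simp
  then show ?thesis unfolding Bd_def using a
    by (metis mult.right_neutral mult_left_mono order_trans zero_le_one)
qed

lemma Bd_ftc:
  assumes r: "r \<ge> 0"
  shows "Bd r = a + integral {0..r} (\<lambda>s. Lam / (real n - 2) * (s * P s * Bd s))"
proof -
  define L where "L = Lam / (real n - 2)"
  have h: "((\<lambda>s. Lam / (real n - 2) * (s * P s * Bd s)) has_integral (Bd r - Bd 0)) {0..r}"
  proof (rule fundamental_theorem_of_calculus[OF r])
    fix x assume x: "x \<in> {0..r}"
    have c: "continuous_on {0..r} (\<lambda>s. s * P s)" by (rule continuous_on_subset[OF sPc]) auto
    have I: "((\<lambda>u. integral {0..u} (\<lambda>s. s * P s)) has_real_derivative x * P x) (at x within {0..r})"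
      by (rule integral_has_real_derivative[OF c x])
    have "(Bd has_real_derivative a * (exp (L * integral {0..x} (\<lambda>s. s * P s)) * (L * (x * P x)))) (at x within {0..r})"
      unfolding Bd_def L_def[symmetric]
      by (intro DERIV_cmult DERIV_chain2[OF DERIV_exp] I)
    moreover have "a * (exp (L * integral {0..x} (\<lambda>s. s * P s)) * (L * (x * P x))) = Lam / (real n - 2) * (x * P x * Bd x)"
      unfolding Bd_def L_def by simp
    ultimately show "(Bd has_vector_derivative Lam / (real n - 2) * (x * P x * Bd x)) (at x within {0..r})"
      by (simp add: has_real_derivative_iff_has_vector_derivative)
  qed
  have "integral {0..r} (\<lambda>s. Lam / (real n - 2) * (s * P s * Bd s)) = Bd r - Bd 0"
    by (rule integral_unique[OF h])
  moreover have "Bd 0 = a" unfolding Bd_def by simp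
  ultimately show ?thesis by linarith
qed

lemma Top_cont:
  assumes "continuous_on {0..} u" "\<And>r. r \<ge> 0 \<Longrightarrow> u r \<ge> 0"
  shows "continuous_on {0..} (Top u)"
proof (rule cont_on_ge0)
  fix R :: real assume "R > 0"
  have "continuous_on {0..} (Gf n (\<lambda>s. P s * F (u s)))"
    by (rule Gf_cont[OF n2 gcont[OF assms] gnn[of u, OF assms(2)]])
  then have "continuous_on {0..R} (\<lambda>r. integral {0..r} (Gf n (\<lambda>s. P s * F (u s))))"
    by (rule indefinite_integral_continuous_1[OF integrable_ge0])
  then show "continuous_on {0..R} (Top u)" unfolding Top_def by (intro continuous_intros)
qed

lemma Top_ge:
  assumes "continuous_on {0..} u" "\<And>r. r \<ge> 0 \<Longrightarrow> u r \<ge> 0" "r \<ge> 0"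
  shows "Top u r \<ge> a"
proof -
  have "continuous_on {0..} (Gf n (\<lambda>s. P s * F (u s)))"
    by (rule Gf_cont[OF n2 gcont[OF assms(1,2)] gnn[of u, OF assms(2)]])
  then have "integral {0..r} (Gf n (\<lambda>s. P s * F (u s))) \<ge> 0"
    by (rule integral_nonneg[OF integrable_ge0]) (auto intro!: Gf_nonneg gcont[OF assms(1,2)] gnn[of u, OF assms(2)])
  then show ?thesis unfolding Top_def by simp
qed

lemma Top_mono:
  assumes "continuous_on {0..} u1" "\<And>r. r \<ge> 0 \<Longrightarrow> u1 r \<ge> 0"
    and "continuous_on {0..} u2" "\<And>r. r \<ge> 0 \<Longrightarrow> u2 r \<ge> 0"
    and le: "\<And>r. r \<ge> 0 \<Longrightarrow> u1 r \<le> u2 r" and r: "r \<ge> 0"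
  shows "Top u1 r \<le> Top u2 r"
proof -
  have c1: "continuous_on {0..} (Gf n (\<lambda>s. P s * F (u1 s)))"
    by (rule Gf_cont[OF n2 gcont[OF assms(1,2)] gnn[of u1, OF assms(2)]])
  have c2: "continuous_on {0..} (Gf n (\<lambda>s. P s * F (u2 s)))"
    by (rule Gf_cont[OF n2 gcont[OF assms(3,4)] gnn[of u2, OF assms(4)]])
  have "integral {0..r} (Gf n (\<lambda>s. P s * F (u1 s))) \<le> integral {0..r} (Gf n (\<lambda>s. P s * F (u2 s)))"
  proof (rule integral_le[OF integrable_ge0[OF c1] integrable_ge0[OF c2]])
    fix t assume t: "t \<in> {0..r}"
    show "Gf n (\<lambda>s. P s * F (u1 s)) t \<le> Gf n (\<lambda>s. P s * F (u2 s)) t"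
    proof (rule Gf_mono[OF gcont[OF assms(1,2)] gcont[OF assms(3,4)]])
      fix s :: real assume s: "s \<ge> 0"
      have "F (u1 s) \<le> F (u2 s)"
        using s assms(2,4) le by (intro mono_onD[OF Fm]) auto
      then show "P s * F (u1 s) \<le> P s * F (u2 s)" by (intro mult_left_mono Pnn s)
    qed (use t in auto)
  qed
  then show ?thesis unfolding Top_def by simp
qed

lemma Top_bd:
  assumes "Inv u" "r \<ge> 0"
  shows "Top u r \<le> Bd r"
proof -
  have uc: "continuous_on {0..} u" and ua: "\<And>r. r \<ge> 0 \<Longrightarrow> a \<le> u r" and ub: "\<And>r. r \<ge> 0 \<Longrightarrow> u r \<le> Bd r"
    using assms(1) unfolding Inv_def by auto
  have u0: "\<And>r. r \<ge> 0 \<Longrightarrow> u r \<ge> 0" using ua a by (meson order_trans zero_le_one)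
  define g where "g = (\<lambda>s. P s * F (u s))"
  have gc: "continuous_on {0..} g" unfolding g_def by (rule gcont[OF uc u0])
  have g0: "\<And>s. s \<ge> 0 \<Longrightarrow> g s \<ge> 0" unfolding g_def by (rule gnn[OF u0])
  have "integral {0..r} (Gf n g) \<le> integral {0..r} (\<lambda>s. s * g s) / (real n - 2)"
    by (rule green[OF n3 gc g0 assms(2)])
  also have "integral {0..r} (\<lambda>s. s * g s) \<le> integral {0..r} (\<lambda>s. Lam * (s * P s * Bd s))"
  proof (rule integral_le)
    show "(\<lambda>s. s * g s) integrable_on {0..r}" by (rule integrable_ge0) (intro continuous_intros gc)
    show "(\<lambda>s. Lam * (s * P s * Bd s)) integrable_on {0..r}"
      by (rule integrable_ge0) (intro continuous_intros Pc Bd_cont)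
    fix s assume s: "s \<in> {0..r}"
    then have s0: "s \<ge> 0" by simp
    have "F (u s) \<le> Lam * u s" using Flin ua[OF s0] a by simp
    also have "\<dots> \<le> Lam * Bd s" using ub[OF s0] Lam by (simp add: mult_left_mono)
    finally have Fb: "F (u s) \<le> Lam * Bd s" .
    have PF: "P s * F (u s) \<le> P s * (Lam * Bd s)" by (rule mult_left_mono[OF Fb Pnn[OF s0]])
    have "s * (P s * F (u s)) \<le> s * (P s * (Lam * Bd s))" by (rule mult_left_mono[OF PF s0])
    then show "s * g s \<le> Lam * (s * P s * Bd s)" unfolding g_def by (simp add: mult_ac)
  qed
  then have "integral {0..r} (\<lambda>s. s * g s) / (real n - 2) \<le> integral {0..r} (\<lambda>s. Lam * (s * P s * Bd s)) / (real n - 2)"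
    using n3 by (intro divide_right_mono) auto
  also have "\<dots> = integral {0..r} (\<lambda>s. Lam / (real n - 2) * (s * P s * Bd s))"
    by (simp add: integral_mult_right)
  also have "\<dots> = Bd r - a" using Bd_ftc[OF assms(2)] by simp
  finally show ?thesis unfolding Top_def g_def by simp
qed

end

context odeP
begin

definition it :: "nat \<Rightarrow> real \<Rightarrow> real" where "it k = (Top ^^ k) (\<lambda>_. a)"

lemma it_0: "it 0 = (\<lambda>_. a)" unfolding it_def by simp
lemma it_Suc: "it (Suc k) = Top (it k)" unfolding it_def by simp

lemma Inv_D:
  assumes "Inv u"
  shows "continuous_on {0..} u" "\<And>r. r \<ge> 0 \<Longrightarrow> a \<le> u r" "\<And>r. r \<ge> 0 \<Longrightarrow> u r \<le> Bd r"
    "\<And>r. r \<ge> 0 \<Longrightarrow> u r \<ge> 0"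
  using assms a unfolding Inv_def by (auto intro: order_trans[OF zero_le_one])

lemma Inv_const: "Inv (\<lambda>_. a)"
  unfolding Inv_def using Bd_ge by auto

lemma Inv_Top: assumes "Inv u" shows "Inv (Top u)"
  using Top_cont[OF Inv_D(1,4)[OF assms]] Top_ge[OF Inv_D(1,4)[OF assms]] Top_bd[OF assms]
  unfolding Inv_def by blast

lemma Inv_it: "Inv (it k)"
  by (induction k) (auto simp: it_0 it_Suc Inv_const Inv_Top)

lemma it_mono: "\<forall>r\<ge>0. it k r \<le> it (Suc k) r"
proof (induction k)
  case 0
  show ?case unfolding it_Suc it_0 using Top_ge[of "\<lambda>_. a"] a by auto
next
  case (Suc k)
  show ?case
  proof (intro allI impI)
    fix r :: real assume r: "r \<ge> 0"
    show "it (Suc k) r \<le> it (Suc (Suc k)) r"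
      unfolding it_Suc[of "Suc k"] unfolding it_Suc[of k]
      by (rule Top_mono[OF Inv_D(1,4)[OF Inv_it] Inv_D(1,4)[OF Inv_Top[OF Inv_it]] _ r])
         (use Suc r in \<open>auto simp: it_Suc\<close>)
  qed
qed

definition vlim :: "real \<Rightarrow> real" where "vlim r = (SUP k. it k r)"

lemma it_bdd: "r \<ge> 0 \<Longrightarrow> bdd_above (range (\<lambda>k. it k r))"
  using Inv_D(3)[OF Inv_it] by (auto intro!: bdd_aboveI)

lemma it_inc: "r \<ge> 0 \<Longrightarrow> incseq (\<lambda>k. it k r)"
  using it_mono by (auto intro!: incseq_SucI)

lemma it_lim: "r \<ge> 0 \<Longrightarrow> (\<lambda>k. it k r) \<longlonglongrightarrow> vlim r"
  unfolding vlim_def by (rule LIMSEQ_incseq_SUP[OF it_bdd it_inc])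

lemma vlim_ge: "r \<ge> 0 \<Longrightarrow> it k r \<le> vlim r"
  unfolding vlim_def by (rule cSUP_upper[OF _ it_bdd]) auto

lemma vlim_a: "r \<ge> 0 \<Longrightarrow> a \<le> vlim r"
  using vlim_ge[of r 0] by (simp add: it_0)

lemma vlim_Bd: "r \<ge> 0 \<Longrightarrow> vlim r \<le> Bd r"
  unfolding vlim_def by (rule cSUP_least) (auto intro: Inv_D(3)[OF Inv_it])

lemma vlim_nn: "r \<ge> 0 \<Longrightarrow> vlim r \<ge> 0"
  using vlim_a a by (meson order_trans zero_le_one)

lemma F_lim: "s \<ge> 0 \<Longrightarrow> (\<lambda>k. F (it k s)) \<longlonglongrightarrow> F (vlim s)"
  by (rule continuous_on_tendsto_compose[OF Fc it_lim]) (auto intro!: vlim_nn always_eventually Inv_D(4)[OF Inv_it])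

definition gB :: "real \<Rightarrow> real" where "gB s = P s * F (Bd s)"

lemma Bd_nn: "r \<ge> 0 \<Longrightarrow> Bd r \<ge> 0" using Bd_ge a by (meson order_trans zero_le_one)

lemma gB_cont: "continuous_on {0..} gB"
  unfolding gB_def by (rule gcont[OF Bd_cont Bd_nn])

lemma gB_nn: "s \<ge> 0 \<Longrightarrow> gB s \<ge> 0" unfolding gB_def by (rule gnn[of Bd, OF Bd_nn])

lemma gk_le: "s \<ge> 0 \<Longrightarrow> P s * F (it k s) \<le> gB s"
  unfolding gB_def
  by (intro mult_left_mono Pnn mono_onD[OF Fm] Inv_D(3,4)[OF Inv_it]) (auto intro: Bd_nn Inv_D(4)[OF Inv_it])

lemma Aint_lim:
  assumes t: "t \<ge> 0"
  shows "(\<lambda>s. mm n s * (P s * F (vlim s))) integrable_on {0..t}"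
    "(\<lambda>k. Aint n (\<lambda>s. P s * F (it k s)) t) \<longlonglongrightarrow> Aint n (\<lambda>s. P s * F (vlim s)) t"
proof -
  have i1: "(\<lambda>s. mm n s * (P s * F (it k s))) integrable_on {0..t}" for k
    by (rule integrable_ge0) (intro continuous_intros mm_cont gcont[OF Inv_D(1,4)[OF Inv_it]])
  have i2: "(\<lambda>s. mm n s * gB s) integrable_on {0..t}"
    by (rule integrable_ge0) (intro continuous_intros mm_cont gB_cont)
  have le: "norm (mm n s * (P s * F (it k s))) \<le> mm n s * gB s" if "s \<in> {0..t}" for k s
  proof -
    have s: "s \<ge> 0" using that by simp
    have "0 \<le> P s * F (it k s)" by (rule gnn[of "it k", OF Inv_D(4)[OF Inv_it] s])
    then show ?thesis using gk_le[OF s, of k] mm_nonneg[OF s, of n]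
      by (simp add: abs_mult mult_left_mono)
  qed
  have conv: "(\<lambda>k. mm n s * (P s * F (it k s))) \<longlonglongrightarrow> mm n s * (P s * F (vlim s))" if "s \<in> {0..t}" for s
    using that by (intro tendsto_intros F_lim) auto
  note dc = dominated_convergence[OF i1 i2 le conv]
  show "(\<lambda>s. mm n s * (P s * F (vlim s))) integrable_on {0..t}" by (rule dc(1))
  show "(\<lambda>k. Aint n (\<lambda>s. P s * F (it k s)) t) \<longlonglongrightarrow> Aint n (\<lambda>s. P s * F (vlim s)) t"
    unfolding Aint_def by (rule dc(2))
qed

lemma Gf_lim:
  assumes r: "r \<ge> 0"
  shows "Gf n (\<lambda>s. P s * F (vlim s)) integrable_on {0..r}"
    "(\<lambda>k. integral {0..r} (Gf n (\<lambda>s. P s * F (it k s)))) \<longlonglongrightarrow> integral {0..r} (Gf n (\<lambda>s. P s * F (vlim s)))"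
proof -
  have i1: "Gf n (\<lambda>s. P s * F (it k s)) integrable_on {0..r}" for k
    by (rule integrable_ge0) (rule Gf_cont[OF n2 gcont[OF Inv_D(1,4)[OF Inv_it]] gnn[of "it k", OF Inv_D(4)[OF Inv_it]]])
  have i2: "Gf n gB integrable_on {0..r}"
    by (rule integrable_ge0) (rule Gf_cont[OF n2 gB_cont gB_nn])
  have le: "norm (Gf n (\<lambda>s. P s * F (it k s)) t) \<le> Gf n gB t" if "t \<in> {0..r}" for k t
  proof -
    have t: "t \<ge> 0" using that by simp
    have "0 \<le> Gf n (\<lambda>s. P s * F (it k s)) t"
      by (rule Gf_nonneg[OF gcont[OF Inv_D(1,4)[OF Inv_it]] gnn[of "it k", OF Inv_D(4)[OF Inv_it]] t])
    moreover have "Gf n (\<lambda>s. P s * F (it k s)) t \<le> Gf n gB t"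
      by (rule Gf_mono[OF gcont[OF Inv_D(1,4)[OF Inv_it]] gB_cont gk_le t])
    ultimately show ?thesis by simp
  qed
  have conv: "(\<lambda>k. Gf n (\<lambda>s. P s * F (it k s)) t) \<longlonglongrightarrow> Gf n (\<lambda>s. P s * F (vlim s)) t" if "t \<in> {0..r}" for t
    unfolding Gf_def divide_inverse using that by (intro tendsto_mult_right Aint_lim(2)) auto
  note dc = dominated_convergence[OF i1 i2 le conv]
  show "Gf n (\<lambda>s. P s * F (vlim s)) integrable_on {0..r}" by (rule dc(1))
  show "(\<lambda>k. integral {0..r} (Gf n (\<lambda>s. P s * F (it k s)))) \<longlonglongrightarrow> integral {0..r} (Gf n (\<lambda>s. P s * F (vlim s)))"
    by (rule dc(2))
qed

lemma vlim_fix: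
  assumes r: "r \<ge> 0"
  shows "vlim r = a + integral {0..r} (Gf n (\<lambda>s. P s * F (vlim s)))"
proof -
  have "(\<lambda>k. it (Suc k) r) \<longlonglongrightarrow> a + integral {0..r} (Gf n (\<lambda>s. P s * F (vlim s)))"
    unfolding it_Suc Top_def by (intro tendsto_intros Gf_lim(2)[OF r])
  moreover have "(\<lambda>k. it (Suc k) r) \<longlonglongrightarrow> vlim r"
    using it_lim[OF r] by (rule LIMSEQ_Suc)
  ultimately show ?thesis using LIMSEQ_unique by blast
qed

lemma vlim_cont: "continuous_on {0..} vlim"
proof (rule cont_on_ge0)
  fix R :: real assume R: "R > 0"
  have "continuous_on {0..R} (\<lambda>r. a + integral {0..r} (Gf n (\<lambda>s. P s * F (vlim s))))"
    by (intro continuous_intros indefinite_integral_continuous_1 Gf_lim(1)) (use R in auto)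
  then show "continuous_on {0..R} vlim"
    by (rule continuous_on_eq) (auto simp: vlim_fix)
qed

end

lemma right0:
  fixes h :: "real \<Rightarrow> real"
  assumes "continuous_on {0..} h"
  shows "(h \<longlongrightarrow> h 0) (at_right 0)"
proof -
  have "(h \<longlongrightarrow> h 0) (at 0 within {0..})"
    using assms by (simp add: continuous_on_eq_continuous_within continuous_within)
  then show ?thesis by (rule tendsto_within_subset) auto
qed

lemma at0_within_ge: "at (0::real) within {0..} = at_right 0"
  by (rule at_within_nhd[where S=UNIV]) auto

context odeP
begin

definition gv :: "real \<Rightarrow> real" where "gv s = P s * F (vlim s)"

definition qf :: "real \<Rightarrow> real" where
  "qf r = (if r = 0 then gv 0 / real n else Aint n gv r / (exp r * r ^ n))"

lemma gv_cont: "continuous_on {0..} gv"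
  unfolding gv_def by (rule gcont[OF vlim_cont vlim_nn])

lemma gv_nn: "s \<ge> 0 \<Longrightarrow> gv s \<ge> 0"
  unfolding gv_def by (rule gnn[of vlim, OF vlim_nn])

lemma G_cont: "continuous_on {0..} (Gf n gv)" by (rule Gf_cont[OF n2 gv_cont gv_nn])

lemma v_rep: "r \<ge> 0 \<Longrightarrow> vlim r = a + integral {0..r} (Gf n gv)"
  unfolding gv_def by (rule vlim_fix)

lemma v0: "vlim 0 = a" using v_rep[of 0] by simp

lemma n_Suc: "n = Suc (n - 1)" using n3 by simp

lemma pow_n: "(r::real) ^ n = r * r ^ (n - 1)"
  by (subst n_Suc) simp

lemma v_deriv:
  assumes r: "r > 0"
  shows "(vlim has_real_derivative r * qf r) (at r)"
proof -
  have "((\<lambda>u. a + integral {0..u} (Gf n gv)) has_real_derivative Gf n gv r) (at r)"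
    using DERIV_add[OF DERIV_const ftc_at[OF G_cont r]] by simp
  then have d: "(vlim has_real_derivative Gf n gv r) (at r)"
    by (rule has_field_derivative_transform_within_open[where S="{0<..}"]) (use r in \<open>auto simp: v_rep\<close>)
  have "r * qf r = Gf n gv r"
    using r unfolding qf_def Gf_def mm_def pow_n by simp
  then show ?thesis using d by simp
qed

lemma Aint_cont: "continuous_on {0..} (Aint n gv)"
proof (rule cont_on_ge0)
  fix R :: real assume "R > 0"
  show "continuous_on {0..R} (Aint n gv)" unfolding Aint_def[abs_def]
    by (rule indefinite_integral_continuous_1[OF integrable_ge0]) (intro continuous_intros mm_cont gv_cont)
qed

lemma qf_lim0: "((\<lambda>r. Aint n gv r / (exp r * r ^ n)) \<longlongrightarrow> gv 0 / real n) (at_right 0)"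
proof (rule lhopital_right_0)
  show "(Aint n gv \<longlongrightarrow> 0) (at_right 0)"
    using right0[OF Aint_cont] by (simp add: Aint_def)
  have "isCont (\<lambda>r::real. exp r * r ^ n) 0" by (auto intro!: continuous_intros simp: isCont_exp)
  then have "((\<lambda>r::real. exp r * r ^ n) \<longlongrightarrow> 0) (at 0)" using n3 by (simp add: isCont_def power_0_left)
  then show "((\<lambda>r::real. exp r * r ^ n) \<longlongrightarrow> 0) (at_right 0)" by (rule filterlim_at_split[THEN iffD1, THEN conjunct2])
  show "eventually (\<lambda>x::real. exp x * x ^ n \<noteq> 0) (at_right 0)"
    unfolding eventually_at_right_field
  proof (intro exI[of _ 1] conjI allI impI)
    fix x :: real assume "0 < x" "x < 1"
    then show "exp x * x ^ n \<noteq> 0" by simp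
  qed simp
  show "eventually (\<lambda>x::real. exp x * x ^ n + real n * x ^ (n - Suc 0) * exp x \<noteq> 0) (at_right 0)"
    unfolding eventually_at_right_field
  proof (intro exI[of _ 1] conjI allI impI)
    fix x :: real assume "0 < x" "x < 1"
    then have "exp x * x ^ n > 0" "real n * x ^ (n - Suc 0) * exp x \<ge> 0" by auto
    then show "exp x * x ^ n + real n * x ^ (n - Suc 0) * exp x \<noteq> 0" by linarith
  qed simp
  show "eventually (\<lambda>x::real. DERIV (Aint n gv) x :> mm n x * gv x) (at_right 0)"
    unfolding eventually_at_right_field
    by (intro exI[of _ 1]) (auto intro!: Aint_deriv gv_cont)
  show "eventually (\<lambda>x::real. DERIV (\<lambda>r. exp r * r ^ n) x :> exp x * x ^ n + real n * x ^ (n - Suc 0) * exp x) (at_right 0)"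
    by (intro always_eventually allI DERIV_mult DERIV_exp DERIV_pow)
  have "((\<lambda>x::real. gv x / (x + real n)) \<longlongrightarrow> gv 0 / (0 + real n)) (at_right 0)"
    by (intro tendsto_intros right0[OF gv_cont]) (use n3 in auto)
  then have l: "((\<lambda>x::real. gv x / (x + real n)) \<longlongrightarrow> gv 0 / real n) (at_right 0)" by simp
  show "((\<lambda>x::real. mm n x * gv x / (exp x * x ^ n + real n * x ^ (n - Suc 0) * exp x)) \<longlongrightarrow> gv 0 / real n) (at_right 0)"
  proof (rule Lim_transform_eventually[OF l])
    show "eventually (\<lambda>x::real. gv x / (x + real n) = mm n x * gv x / (exp x * x ^ n + real n * x ^ (n - Suc 0) * exp x)) (at_right 0)"
      unfolding eventually_at_right_field
    proof (intro exI[of _ 1] conjI allI impI)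
      fix x :: real assume x: "0 < x" "x < 1"
      define K where "K = exp x * x ^ (n - Suc 0)"
      have D: "exp x * x ^ n + real n * x ^ (n - Suc 0) * exp x = (x + real n) * K"
        unfolding K_def using pow_n[of x] by (simp add: algebra_simps)
      have M: "mm n x = K" unfolding K_def mm_def by simp
      have "x + real n > 0" "K > 0" using x unfolding K_def by auto
      then show "gv x / (x + real n) = mm n x * gv x / (exp x * x ^ n + real n * x ^ (n - Suc 0) * exp x)"
        unfolding D M by simp
    qed simp
  qed
qed

lemma qf_cont: "continuous_on {0..} qf"
  unfolding continuous_on_eq_continuous_within
proof
  fix x :: real assume x: "x \<in> {0..}"
  show "continuous (at x within {0..}) qf"
  proof (cases "x = 0")
    case True
    have "(qf \<longlongrightarrow> gv 0 / real n) (at_right 0)"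
    proof (rule Lim_transform_eventually[OF qf_lim0])
      show "eventually (\<lambda>r. Aint n gv r / (exp r * r ^ n) = qf r) (at_right 0)"
        unfolding eventually_at_right_field qf_def by (intro exI[of _ 1]) auto
    qed
    then show ?thesis using True by (simp add: continuous_within at0_within_ge qf_def)
  next
    case False
    then have xp: "x > 0" using x by simp
    have cA: "isCont (\<lambda>r. Aint n gv r / (exp r * r ^ n)) x"
      using xp by (intro continuous_intros DERIV_isCont[OF Aint_deriv[OF gv_cont xp]]) auto
    have ev: "eventually (\<lambda>r. Aint n gv r / (exp r * r ^ n) = qf r) (nhds x)"
    proof -
      have "eventually (\<lambda>r. r \<in> {0<..}) (nhds x)" by (rule eventually_nhds_in_open) (use xp in auto)
      then show ?thesis by (rule eventually_mono) (simp add: qf_def)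
    qed
    have "isCont qf x" using isCont_cong[OF ev] cA by simp
    then show ?thesis by (rule continuous_at_imp_continuous_within)
  qed
qed

lemma qf_deriv:
  assumes r: "r > 0"
  shows "(qf has_real_derivative (gv r - real n * qf r - r * qf r) / r) (at r)"
proof -
  have e: "((\<lambda>r. exp r * r ^ n) has_real_derivative exp r * r ^ n + real n * r ^ (n - Suc 0) * exp r) (at r)"
    by (intro DERIV_mult DERIV_exp DERIV_pow)
  have E: "exp r * r ^ n > 0" using r by simp
  have d: "((\<lambda>r. Aint n gv r / (exp r * r ^ n)) has_real_derivative
     (mm n r * gv r * (exp r * r ^ n) - Aint n gv r * (exp r * r ^ n + real n * r ^ (n - Suc 0) * exp r))
       / ((exp r * r ^ n) * (exp r * r ^ n))) (at r)"
    by (rule DERIV_divide[OF Aint_deriv[OF gv_cont r] e]) (metis E less_irrefl)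
  have "(mm n r * gv r * (exp r * r ^ n) - Aint n gv r * (exp r * r ^ n + real n * r ^ (n - Suc 0) * exp r))
       / ((exp r * r ^ n) * (exp r * r ^ n)) = (gv r - real n * qf r - r * qf r) / r"
  proof -
    define A where "A = Aint n gv r"
    define w where "w = r ^ (n - Suc 0)"
    have w: "w > 0" unfolding w_def using r by simp
    have rn: "r ^ n = r * w" unfolding w_def using pow_n[of r] by simp
    have "qf r = A / (exp r * (r * w))" unfolding qf_def A_def rn[symmetric] using r by simp
    then have Aeq: "A = r * (w * (exp r * qf r))" using r w by (simp add: divide_eq_eq mult_ac)
    have M: "mm n r = exp r * w" unfolding mm_def w_def by simp
    have num: "mm n r * gv r * (exp r * r ^ n) - A * (exp r * r ^ n + real n * w * exp r)
        = (exp r * w)^2 * r * (gv r - real n * qf r - r * qf r)"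
      using rn Aeq M by (simp add: algebra_simps power2_eq_square)
    have den: "(exp r * r ^ n) * (exp r * r ^ n) = (exp r * w)^2 * r * r"
      using rn by (simp add: algebra_simps power2_eq_square)
    have X: "(exp r * w)^2 > 0" using w by simp
    show ?thesis unfolding A_def[symmetric] w_def[symmetric] num den using X r by simp
  qed
  with d have "((\<lambda>r. Aint n gv r / (exp r * r ^ n)) has_real_derivative (gv r - real n * qf r - r * qf r) / r) (at r)"
    by simp
  then show ?thesis
    by (rule has_field_derivative_transform_within_open[where S="{0<..}"]) (use r in \<open>auto simp: qf_def\<close>)
qed

lemma qf0: "real n * qf 0 = gv 0" unfolding qf_def using n3 by simp

lemma qf_nn: "r \<ge> 0 \<Longrightarrow> qf r \<ge> 0"
  unfolding qf_def using gv_nn Aint_nonneg[OF gv_cont gv_nn] by (auto intro!: divide_nonneg_nonneg)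

end

lemma Gf_cmult:
  fixes c :: real
  shows "Gf n (\<lambda>s. c * g s) t = c * Gf n g t"
proof -
  have "Aint n (\<lambda>s. c * g s) t = c * Aint n g t"
    unfolding Aint_def by (simp add: mult.left_commute[of "mm n _" c] integral_mult_right)
  then show ?thesis unfolding Gf_def by simp
qed

context odeP
begin

lemma large_lemma:
  assumes Qc: "continuous_on {0..} Q" and QP: "\<And>s. s \<ge> 0 \<Longrightarrow> 0 \<le> Q s \<and> Q s \<le> P s"
    and X: "filterlim (\<lambda>T. integral {1..T} (Gf n Q)) at_top at_top" and Fa: "F a > 0"
  shows "filterlim vlim at_top at_top"
proof -
  have Qnn: "\<And>s. s \<ge> 0 \<Longrightarrow> Q s \<ge> 0" using QP by blast
  have cQ: "continuous_on {0..} (\<lambda>s. F a * Q s)" by (intro continuous_intros Qc)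
  have GQ: "continuous_on {0..} (Gf n Q)" by (rule Gf_cont[OF n2 Qc Qnn])
  have low: "a + F a * integral {1..r} (Gf n Q) \<le> vlim r" if r: "r \<ge> 1" for r
  proof -
    have r0: "r \<ge> 0" using r by simp
    have "integral {1..r} (Gf n gv) \<le> integral {0..r} (Gf n gv)"
      by (rule integral_subset_le) (auto intro!: integrable_continuous_real continuous_on_subset[OF G_cont] Gf_nonneg gv_cont gv_nn)
    moreover have "integral {1..r} (\<lambda>t. F a * Gf n Q t) \<le> integral {1..r} (Gf n gv)"
    proof (rule integral_le)
      show "(\<lambda>t. F a * Gf n Q t) integrable_on {1..r}"
        by (auto intro!: integrable_continuous_real continuous_intros continuous_on_subset[OF GQ])
      show "Gf n gv integrable_on {1..r}"
        by (auto intro!: integrable_continuous_real continuous_on_subset[OF G_cont])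
      fix t assume t: "t \<in> {1..r}"
      have "Gf n (\<lambda>s. F a * Q s) t \<le> Gf n gv t"
      proof (rule Gf_mono[OF cQ gv_cont])
        fix s :: real assume s: "s \<ge> 0"
        have "F a \<le> F (vlim s)" by (rule mono_onD[OF Fm]) (use a vlim_a[OF s] in auto)
        moreover have "F a \<ge> 0" using Fa by simp
        ultimately have "F a * Q s \<le> F (vlim s) * P s"
          using QP[OF s] by (intro mult_mono) auto
        then show "F a * Q s \<le> gv s" unfolding gv_def by (simp add: mult.commute)
      qed (use t in auto)
      then show "F a * Gf n Q t \<le> Gf n gv t" by (simp add: Gf_cmult)
    qed
    moreover have "integral {1..r} (\<lambda>t. F a * Gf n Q t) = F a * integral {1..r} (Gf n Q)"
      by (rule integral_mult_right)
    ultimately show ?thesis using v_rep[OF r0] by linarith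
  qed
  have "filterlim (\<lambda>r. a + F a * integral {1..r} (Gf n Q)) at_top at_top"
    by (rule filterlim_tendsto_add_at_top[OF tendsto_const filterlim_tendsto_pos_mult_at_top[OF tendsto_const Fa X]])
  then show ?thesis
  proof (rule filterlim_at_top_mono)
    show "\<forall>\<^sub>F x in at_top. a + F a * integral {1..x} (Gf n Q) \<le> vlim x"
      using eventually_ge_at_top[of "1::real"] by (rule eventually_mono) (rule low)
  qed
qed

end

lemma norm_at_right0: "filterlim (\<lambda>x::'a::real_normed_vector. norm x) (at_right 0) (at 0)"
  unfolding filterlim_at
proof
  show "\<forall>\<^sub>F x in at (0::'a). norm x \<in> {0<..} \<and> norm x \<noteq> 0"
    unfolding eventually_at_filter by (rule always_eventually) auto
  show "((\<lambda>x::'a. norm x) \<longlongrightarrow> 0) (at 0)"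
    using tendsto_norm[OF tendsto_ident_at[of "0::'a" UNIV]] by simp
qed

lemma cont_norm_comp:
  fixes h :: "real \<Rightarrow> real"
  assumes "continuous_on {0..} h"
  shows "continuous_on UNIV (\<lambda>x::'a::real_normed_vector. h (norm x))"
  by (rule continuous_on_compose2[OF assms]) (auto intro: continuous_intros)

lemma radial_solution:
  fixes v q P F :: "real \<Rightarrow> real"
  assumes vd: "\<And>r. r > 0 \<Longrightarrow> (v has_real_derivative r * q r) (at r)"
    and vc: "continuous_on {0..} v"
    and qc: "continuous_on {0..} q"
    and qd: "\<And>r. r > 0 \<Longrightarrow> (q has_real_derivative (P r * F (v r) - real DIM('a) * q r - r * q r) / r) (at r)"
    and Pc: "continuous_on {0..} P" and Fc: "continuous_on {0..} F"
    and vnn: "\<And>r. r \<ge> 0 \<Longrightarrow> v r \<ge> 0"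
    and qnn: "\<And>r. r \<ge> 0 \<Longrightarrow> q r \<ge> 0"
    and q0: "real DIM('a) * q 0 = P 0 * F (v 0)"
  shows "entire_classical_solution P F (\<lambda>x::'a::euclidean_space. v (norm x))"
proof -
  define Z where "Z r = P r * F (v r) - real DIM('a) * q r - r * q r" for r
  define g where "g x = q (norm x) *\<^sub>R x" for x :: 'a
  define H where "H x h = ((Z (norm x) / (norm x)^2) * (x \<bullet> h)) *\<^sub>R x + q (norm x) *\<^sub>R h" for x h :: 'a
  have Z0: "Z 0 = 0" unfolding Z_def using q0 by simp
  have Fvc: "continuous_on {0..} (\<lambda>r. F (v r))"
    by (rule continuous_on_compose2[OF Fc vc]) (use vnn in auto)
  have Zc: "continuous_on {0..} Z" unfolding Z_def[abs_def]
    by (intro continuous_intros Pc Fvc qc)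
  have cZ: "isCont (\<lambda>x::'a. Z (norm x)) x" for x
    using cont_norm_comp[OF Zc, where 'a='a] by (simp add: continuous_on_eq_continuous_at)
  have cq: "isCont (\<lambda>x::'a. q (norm x)) x" for x
    using cont_norm_comp[OF qc, where 'a='a] by (simp add: continuous_on_eq_continuous_at)
  have q_right: "(q \<longlongrightarrow> q 0) (at_right 0)"
  proof -
    have "(q \<longlongrightarrow> q 0) (at 0 within {0..})"
      using qc by (simp add: continuous_on_eq_continuous_within continuous_within)
    then show ?thesis by (rule tendsto_within_subset) auto
  qed
  have v_right: "(v \<longlongrightarrow> v 0) (at_right 0)"
  proof -
    have "(v \<longlongrightarrow> v 0) (at 0 within {0..})"
      using vc by (simp add: continuous_on_eq_continuous_within continuous_within)
    then show ?thesis by (rule tendsto_within_subset) auto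
  qed
  have D1: "((\<lambda>x. v (norm x)) has_derivative (\<lambda>h. g x \<bullet> h)) (at x)" for x :: 'a
  proof (cases "x = 0")
    case False
    have r: "norm x > 0" using False by simp
    have "((\<lambda>y. v (norm y)) has_derivative (\<lambda>h. (norm x * q (norm x)) * (h \<bullet> sgn x))) (at x)"
      by (rule has_derivative_compose[OF has_derivative_norm[OF False] vd[OF r, unfolded has_field_derivative_def]])
    moreover have "(\<lambda>h. (norm x * q (norm x)) * (h \<bullet> sgn x)) = (\<lambda>h. g x \<bullet> h)"
      using r by (auto simp: g_def sgn_div_norm inner_commute)
    ultimately show ?thesis by simp
  next
    case True
    have lh: "((\<lambda>r. (v r - v 0) / r) \<longlongrightarrow> 0) (at_right 0)"
    proof (rule lhopital_right_0)
      show "((\<lambda>r. v r - v 0) \<longlongrightarrow> 0) (at_right 0)"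
        using tendsto_diff[OF v_right tendsto_const[of "v 0"]] by simp
      show "((\<lambda>r::real. r) \<longlongrightarrow> 0) (at_right 0)" by (rule tendsto_ident_at)
      show "eventually (\<lambda>r::real. r \<noteq> 0) (at_right 0)" by (simp add: eventually_at_right_less eventually_mono[OF eventually_at_right_less] )
      show "eventually (\<lambda>r::real. (1::real) \<noteq> 0) (at_right 0)" by simp
      show "eventually (\<lambda>r. ((\<lambda>r. v r - v 0) has_real_derivative r * q r) (at r)) (at_right 0)"
        using eventually_at_right_less[of "0::real"]
        by (rule eventually_mono) (auto intro!: derivative_eq_intros vd)
      show "eventually (\<lambda>r::real. ((\<lambda>r. r) has_real_derivative 1) (at r)) (at_right 0)"
        by (intro always_eventually allI DERIV_ident)
      have "((\<lambda>r. r * q r) \<longlongrightarrow> 0 * q 0) (at_right 0)"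
        by (intro tendsto_intros q_right)
      then show "((\<lambda>r. r * q r / 1) \<longlongrightarrow> 0) (at_right 0)" by simp
    qed
    have lh2: "((\<lambda>h::'a. (v (norm h) - v 0) / norm h) \<longlongrightarrow> 0) (at 0)"
      by (rule filterlim_compose[OF lh norm_at_right0])
    have "((\<lambda>h::'a. norm (v (norm (0 + h)) - v (norm 0) - g 0 \<bullet> h) / norm h) \<longlongrightarrow> 0) (at 0)"
    proof -
      have "((\<lambda>h::'a. \<bar>(v (norm h) - v 0) / norm h\<bar>) \<longlongrightarrow> 0) (at 0)"
        using tendsto_rabs_zero[OF lh2] .
      moreover have "(\<lambda>h::'a. \<bar>(v (norm h) - v 0) / norm h\<bar>) = (\<lambda>h. norm (v (norm (0 + h)) - v (norm 0) - g 0 \<bullet> h) / norm h)"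
        by (auto simp: g_def)
      ultimately show ?thesis by simp
    qed
    moreover have "bounded_linear (\<lambda>h. g 0 \<bullet> h)" by (rule bounded_linear_inner_right)
    ultimately show ?thesis unfolding True has_derivative_at by simp
  qed
  have D2: "(g has_derivative H x) (at x)" for x :: 'a
  proof (cases "x = 0")
    case False
    have r: "norm x > 0" using False by simp
    have dq: "((\<lambda>y. q (norm y)) has_derivative (\<lambda>h. (Z (norm x) / norm x) * (h \<bullet> sgn x))) (at x)"
      by (rule has_derivative_compose[OF has_derivative_norm[OF False] qd[OF r, folded Z_def, unfolded has_field_derivative_def]])
    have "(g has_derivative (\<lambda>h. q (norm x) *\<^sub>R h + ((Z (norm x) / norm x) * (h \<bullet> sgn x)) *\<^sub>R x)) (at x)"
      unfolding g_def[abs_def] by (rule has_derivative_scaleR[OF dq has_derivative_ident])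
    moreover have "(\<lambda>h. q (norm x) *\<^sub>R h + ((Z (norm x) / norm x) * (h \<bullet> sgn x)) *\<^sub>R x) = H x"
      using r by (auto simp: H_def sgn_div_norm inner_commute power2_eq_square fun_eq_iff divide_inverse mult_ac)
    ultimately show ?thesis by simp
  next
    case True
    have H0: "H 0 = (\<lambda>h. q 0 *\<^sub>R h)" by (auto simp: H_def)
    have lq: "((\<lambda>h::'a. q (norm h)) \<longlongrightarrow> q 0) (at 0)"
      using cq[of 0] by (simp add: isCont_def)
    have "((\<lambda>h::'a. q (norm h) - q 0) \<longlongrightarrow> 0) (at 0)"
      using tendsto_diff[OF lq tendsto_const[of "q 0"]] by simp
    then have "((\<lambda>h::'a. \<bar>q (norm h) - q 0\<bar>) \<longlongrightarrow> 0) (at 0)"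
      by (rule tendsto_rabs_zero)
    moreover have "eventually (\<lambda>h::'a. \<bar>q (norm h) - q 0\<bar> = norm (g (0 + h) - g 0 - q 0 *\<^sub>R h) / norm h) (at 0)"
      unfolding eventually_at_filter
    proof (rule always_eventually, intro allI impI)
      fix h :: 'a assume "h \<noteq> 0"
      then show "\<bar>q (norm h) - q 0\<bar> = norm (g (0 + h) - g 0 - q 0 *\<^sub>R h) / norm h"
        by (simp add: g_def scaleR_diff_left[symmetric])
    qed
    ultimately have "((\<lambda>h::'a. norm (g (0 + h) - g 0 - q 0 *\<^sub>R h) / norm h) \<longlongrightarrow> 0) (at 0)"
      by (rule Lim_transform_eventually)
    moreover have "bounded_linear (\<lambda>h::'a. q 0 *\<^sub>R h)" by (rule bounded_linear_scaleR_right)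
    ultimately show ?thesis unfolding True H0 has_derivative_at by simp
  qed
  have D3: "continuous_on UNIV (\<lambda>x. H x b)" if b: "b \<in> Basis" for b :: 'a
  proof (rule continuous_at_imp_continuous_on, intro ballI)
    fix x :: 'a assume "x \<in> UNIV"
    show "isCont (\<lambda>x. H x b) x"
    proof (cases "x = 0")
      case False
      have "isCont (\<lambda>x. ((Z (norm x) / (norm x)^2) * (x \<bullet> b)) *\<^sub>R x + q (norm x) *\<^sub>R b) x"
        using False by (intro continuous_intros cZ cq) auto
      then show ?thesis unfolding H_def .
    next
      case True
      have t1: "((\<lambda>x::'a. ((Z (norm x) / (norm x)^2) * (x \<bullet> b)) *\<^sub>R x) \<longlongrightarrow> 0) (at 0)"
      proof (rule Lim_null_comparison)
        show "eventually (\<lambda>x::'a. norm (((Z (norm x) / (norm x)^2) * (x \<bullet> b)) *\<^sub>R x) \<le> \<bar>Z (norm x)\<bar>) (at 0)"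
        proof (rule always_eventually, intro allI)
          fix x :: 'a
          show "norm (((Z (norm x) / (norm x)^2) * (x \<bullet> b)) *\<^sub>R x) \<le> \<bar>Z (norm x)\<bar>"
          proof (cases "x = 0")
            case True then show ?thesis by simp
          next
            case False
            have xb: "\<bar>x \<bullet> b\<bar> \<le> norm x" using Basis_le_norm[OF b] .
            have "norm (((Z (norm x) / (norm x)^2) * (x \<bullet> b)) *\<^sub>R x) = \<bar>Z (norm x)\<bar> / (norm x)^2 * \<bar>x \<bullet> b\<bar> * norm x"
              by (simp add: abs_mult)
            also have "\<dots> \<le> \<bar>Z (norm x)\<bar> / (norm x)^2 * norm x * norm x"
              by (intro mult_right_mono mult_left_mono xb) auto
            also have "\<dots> = \<bar>Z (norm x)\<bar>" using False by (simp add: power2_eq_square)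
            finally show ?thesis .
          qed
        qed
        have "((\<lambda>x::'a. Z (norm x)) \<longlongrightarrow> Z 0) (at 0)" using cZ[of 0] by (simp add: isCont_def)
        then show "((\<lambda>x::'a. \<bar>Z (norm x)\<bar>) \<longlongrightarrow> 0) (at 0)"
          using tendsto_rabs[of "\<lambda>x::'a. Z (norm x)" "Z 0"] Z0 by simp
      qed
      have t2: "((\<lambda>x::'a. q (norm x) *\<^sub>R b) \<longlongrightarrow> q 0 *\<^sub>R b) (at 0)"
        using cq[of 0] by (intro tendsto_intros) (simp add: isCont_def)
      have "((\<lambda>x. H x b) \<longlongrightarrow> 0 + q 0 *\<^sub>R b) (at 0)"
        unfolding H_def by (rule tendsto_add[OF t1 t2])
      then show ?thesis using True by (simp add: isCont_def H_def)
    qed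
  qed
  have D4: "(\<Sum>b\<in>Basis. H x b \<bullet> b) + norm (g x) = P (norm x) * F (v (norm x))" for x :: 'a
  proof -
    have "(\<Sum>b\<in>Basis. H x b \<bullet> b) = (\<Sum>b\<in>Basis. (Z (norm x) / (norm x)^2) * ((x \<bullet> b) * (x \<bullet> b)) + q (norm x))"
      unfolding H_def by (intro sum.cong refl) (simp add: inner_add_left algebra_simps)
    also have "\<dots> = (Z (norm x) / (norm x)^2) * (x \<bullet> x) + real DIM('a) * q (norm x)"
      by (simp add: sum.distrib sum_distrib_left sum_divide_distrib euclidean_inner[of x x])
    also have "(Z (norm x) / (norm x)^2) * (x \<bullet> x) = Z (norm x)"
      using Z0 by (cases "x = 0") (auto simp: power2_norm_eq_inner[symmetric])
    finally have s: "(\<Sum>b\<in>Basis. H x b \<bullet> b) = Z (norm x) + real DIM('a) * q (norm x)" .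
    have "norm (g x) = norm x * q (norm x)" unfolding g_def using qnn[of "norm x"] by simp
    then show ?thesis using s unfolding Z_def by simp
  qed
  show ?thesis unfolding entire_classical_solution_def
    by (intro exI[of _ g] exI[of _ H] conjI allI ballI D1 D2 D3 D4)
qed

lemma holder_cont:
  fixes g :: "'a::metric_space \<Rightarrow> real"
  assumes h: "loc_holder_on \<alpha> S g" and al: "\<alpha> > 0" and K: "compact K" "K \<subseteq> S"
  shows "continuous_on K g"
proof -
  have "\<exists>C. \<forall>x\<in>K. \<forall>y\<in>K. \<bar>g x - g y\<bar> \<le> C * dist x y powr \<alpha>"
    using h K unfolding loc_holder_on_def by simp
  then obtain C where C0: "\<forall>x\<in>K. \<forall>y\<in>K. \<bar>g x - g y\<bar> \<le> C * dist x y powr \<alpha>" ..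
  have C: "\<bar>g x - g y\<bar> \<le> C * dist x y powr \<alpha>" if "x \<in> K" "y \<in> K" for x y
    using C0 that by simp
  define C' where "C' = max C 1"
  have C'p: "C' > 0" unfolding C'_def by simp
  show ?thesis unfolding continuous_on_iff
  proof (intro ballI allI impI)
    fix x e assume x: "x \<in> K" and e: "(e::real) > 0"
    define d where "d = (e / C') powr (1 / \<alpha>)"
    have dp: "d > 0" unfolding d_def using e C'p by simp
    have "d powr \<alpha> = (e / C') powr (1 / \<alpha> * \<alpha>)" unfolding d_def by (rule powr_powr)
    also have "1 / \<alpha> * \<alpha> = 1" using al by simp
    also have "(e / C') powr 1 = e / C'" using e C'p by simp
    finally have dd: "d powr \<alpha> = e / C'" .
    show "\<exists>d>0. \<forall>x'\<in>K. dist x' x < d \<longrightarrow> dist (g x') (g x) < e"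
    proof (intro exI[of _ d] conjI ballI impI dp)
      fix y assume y: "y \<in> K" and yd: "dist y x < d"
      have "dist y x powr \<alpha> < d powr \<alpha>" by (rule powr_less_mono2[OF al _ yd]) simp
      then have lt: "dist y x powr \<alpha> < e / C'" using dd by simp
      have "\<bar>g y - g x\<bar> \<le> C * dist y x powr \<alpha>" by (rule C[OF y x])
      also have "\<dots> \<le> C' * dist y x powr \<alpha>" unfolding C'_def by (intro mult_right_mono) auto
      also have "\<dots> < C' * (e / C')" by (rule mult_strict_left_mono[OF lt C'p])
      also have "\<dots> = e" using C'p by simp
      finally show "dist (g y) (g x) < e" by (simp add: dist_real_def)
    qed
  qed
qed

lemma SUP_close:
  fixes f1 f2 :: "'a \<Rightarrow> real"
  assumes "S \<noteq> {}" "bdd_above (f1 ` S)" "bdd_above (f2 ` S)" "\<And>y. y \<in> S \<Longrightarrow> \<bar>f1 y - f2 y\<bar> \<le> e"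
  shows "\<bar>(SUP y\<in>S. f1 y) - (SUP y\<in>S. f2 y)\<bar> \<le> e"
proof -
  have "(SUP y\<in>S. f1 y) \<le> (SUP y\<in>S. f2 y) + e"
  proof (rule cSUP_least[OF assms(1)])
    fix y assume y: "y \<in> S"
    have "f2 y \<le> (SUP y\<in>S. f2 y)" by (rule cSUP_upper[OF y assms(3)])
    then show "f1 y \<le> (SUP y\<in>S. f2 y) + e" using assms(4)[OF y] by linarith
  qed
  moreover have "(SUP y\<in>S. f2 y) \<le> (SUP y\<in>S. f1 y) + e"
  proof (rule cSUP_least[OF assms(1)])
    fix y assume y: "y \<in> S"
    have "f1 y \<le> (SUP y\<in>S. f1 y)" by (rule cSUP_upper[OF y assms(2)])
    then show "f2 y \<le> (SUP y\<in>S. f1 y) + e" using assms(4)[OF y] by linarith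
  qed
  ultimately show ?thesis by linarith
qed

lemma INF_close:
  fixes f1 f2 :: "'a \<Rightarrow> real"
  assumes "S \<noteq> {}" "bdd_below (f1 ` S)" "bdd_below (f2 ` S)" "\<And>y. y \<in> S \<Longrightarrow> \<bar>f1 y - f2 y\<bar> \<le> e"
  shows "\<bar>(INF y\<in>S. f1 y) - (INF y\<in>S. f2 y)\<bar> \<le> e"
proof -
  have "(INF y\<in>S. f1 y) \<ge> (INF y\<in>S. f2 y) - e"
  proof (rule cINF_greatest[OF assms(1)])
    fix y assume y: "y \<in> S"
    have "f2 y \<ge> (INF y\<in>S. f2 y)" by (rule cINF_lower[OF assms(3) y])
    then show "f1 y \<ge> (INF y\<in>S. f2 y) - e" using assms(4)[OF y] by linarith
  qed
  moreover have "(INF y\<in>S. f2 y) \<ge> (INF y\<in>S. f1 y) - e"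
  proof (rule cINF_greatest[OF assms(1)])
    fix y assume y: "y \<in> S"
    have "f1 y \<ge> (INF y\<in>S. f1 y)" by (rule cINF_lower[OF assms(2) y])
    then show "f2 y \<ge> (INF y\<in>S. f1 y) - e" using assms(4)[OF y] by linarith
  qed
  ultimately show ?thesis by linarith
qed

lemma sphere_scale:
  assumes r: "r \<ge> 0"
  shows "sphere (0::'a::euclidean_space) r = (\<lambda>y. r *\<^sub>R y) ` sphere 0 1"
proof (cases "r = 0")
  case True
  have "sphere (0::'a) 1 \<noteq> {}" by simp
  then obtain y0 where y0: "y0 \<in> sphere (0::'a) 1" by blast
  have "(\<lambda>y. 0 *\<^sub>R y) ` sphere (0::'a) 1 = {0}" by (auto intro: image_eqI[OF _ y0])
  then show ?thesis using True by auto
next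
  case False
  then have rp: "r > 0" using r by simp
  show ?thesis
  proof
    show "sphere 0 r \<subseteq> (\<lambda>y. r *\<^sub>R y) ` sphere (0::'a) 1"
    proof
      fix x :: 'a assume x: "x \<in> sphere 0 r"
      have "x = r *\<^sub>R (x /\<^sub>R r)" using rp by simp
      moreover have "x /\<^sub>R r \<in> sphere 0 1" using x rp by simp
      ultimately show "x \<in> (\<lambda>y. r *\<^sub>R y) ` sphere 0 1" by blast
    qed
    show "(\<lambda>y. r *\<^sub>R y) ` sphere (0::'a) 1 \<subseteq> sphere 0 r" using rp by auto
  qed
qed

lemma sphere_bdd:
  fixes p :: "'a::euclidean_space \<Rightarrow> real"
  assumes "continuous_on UNIV p"
  shows "bdd_above ((\<lambda>y. p (r *\<^sub>R y)) ` sphere 0 1)" "bdd_below ((\<lambda>y. p (r *\<^sub>R y)) ` sphere 0 1)"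
proof -
  have "compact ((\<lambda>y. p (r *\<^sub>R y)) ` sphere (0::'a) 1)"
  proof (rule compact_continuous_image)
    show "continuous_on (sphere 0 1) (\<lambda>y::'a. p (r *\<^sub>R y))"
      by (rule continuous_on_compose2[OF assms]) (auto intro: continuous_intros)
  qed simp
  then have "bounded ((\<lambda>y. p (r *\<^sub>R y)) ` sphere (0::'a) 1)" by (rule compact_imp_bounded)
  then show "bdd_above ((\<lambda>y. p (r *\<^sub>R y)) ` sphere 0 1)" "bdd_below ((\<lambda>y. p (r *\<^sub>R y)) ` sphere 0 1)"
    by (auto intro: bounded_imp_bdd_above bounded_imp_bdd_below)
qed

lemma sphere_close:
  fixes p :: "'a::euclidean_space \<Rightarrow> real"
  assumes pc: "continuous_on UNIV p" and x: "x \<ge> 0" and e: "e > 0"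
  shows "\<exists>d>0. \<forall>r\<ge>0. \<bar>r - x\<bar> < d \<longrightarrow> (\<forall>y\<in>sphere (0::'a) 1. \<bar>p (r *\<^sub>R y) - p (x *\<^sub>R y)\<bar> \<le> e)"
proof -
  have "uniformly_continuous_on (cball (0::'a) (x + 1)) p"
    by (rule compact_uniformly_continuous[OF continuous_on_subset[OF pc]]) auto
  then obtain d where d: "d > 0" and dU: "\<And>u u'. u \<in> cball 0 (x+1) \<Longrightarrow> u' \<in> cball 0 (x+1) \<Longrightarrow> dist u' u < d \<Longrightarrow> dist (p u') (p u) < e"
    unfolding uniformly_continuous_on_def using e by metis
  show ?thesis
  proof (intro exI[of _ "min d 1"] conjI allI impI ballI)
    show "min d 1 > 0" using d by simp
    fix r :: real and y :: 'a assume r: "r \<ge> 0" and rx: "\<bar>r - x\<bar> < min d 1" and y: "y \<in> sphere 0 1"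
    have ny: "norm y = 1" using y by simp
    have u1: "x *\<^sub>R y \<in> cball 0 (x+1)" using x ny by simp
    have rx1: "\<bar>r - x\<bar> < 1" using rx by simp
    have "r \<le> x + 1" using rx1 abs_less_iff[of "r - x" 1] by linarith
    then have u2: "r *\<^sub>R y \<in> cball 0 (x+1)" using r ny by simp
    have "dist (r *\<^sub>R y) (x *\<^sub>R y) = norm ((r - x) *\<^sub>R y)"
      by (simp add: dist_norm scaleR_diff_left)
    also have "\<dots> = \<bar>r - x\<bar>" using ny by simp
    finally have deq: "dist (r *\<^sub>R y) (x *\<^sub>R y) = \<bar>r - x\<bar>" .
    have rxd: "\<bar>r - x\<bar> < d" using rx by simp
    have "dist (r *\<^sub>R y) (x *\<^sub>R y) < d" unfolding deq by (rule rxd)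
    then have "dist (p (r *\<^sub>R y)) (p (x *\<^sub>R y)) < e" by (rule dU[OF u1 u2])
    then show "\<bar>p (r *\<^sub>R y) - p (x *\<^sub>R y)\<bar> \<le> e" by (simp add: dist_real_def)
  qed
qed

lemma sup_sphere_cont:
  fixes p :: "'a::euclidean_space \<Rightarrow> real"
  assumes pc: "continuous_on UNIV p"
  shows "continuous_on {0..} (\<lambda>r. SUP x\<in>sphere (0::'a) r. p x)"
  unfolding continuous_on_iff
proof (intro ballI allI impI)
  fix x e assume x: "x \<in> {0::real..}" and e: "(e::real) > 0"
  have x0: "x \<ge> 0" using x by simp
  obtain d where d: "d > 0" and dd: "\<And>r. r \<ge> 0 \<Longrightarrow> \<bar>r - x\<bar> < d \<Longrightarrow> (\<forall>y\<in>sphere (0::'a) 1. \<bar>p (r *\<^sub>R y) - p (x *\<^sub>R y)\<bar> \<le> e / 2)"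
    using sphere_close[OF pc x0 half_gt_zero[OF e]] by blast
  show "\<exists>d>0. \<forall>x'\<in>{0..}. dist x' x < d \<longrightarrow> dist (SUP x\<in>sphere (0::'a) x'. p x) (SUP x\<in>sphere 0 x. p x) < e"
  proof (intro exI[of _ d] conjI ballI impI d)
    fix r assume r: "r \<in> {0::real..}" and rd: "dist r x < d"
    have "\<bar>(SUP y\<in>sphere (0::'a) 1. p (r *\<^sub>R y)) - (SUP y\<in>sphere 0 1. p (x *\<^sub>R y))\<bar> \<le> e / 2"
      by (rule SUP_close[OF _ sphere_bdd(1)[OF pc] sphere_bdd(1)[OF pc]])
         (use dd[of r] r rd in \<open>auto simp: dist_real_def\<close>)
    moreover have "(SUP x\<in>sphere (0::'a) r. p x) = (SUP y\<in>sphere 0 1. p (r *\<^sub>R y))"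
      using r by (subst sphere_scale[of r]) (auto simp: image_image)
    moreover have "(SUP z\<in>sphere (0::'a) x. p z) = (SUP y\<in>sphere 0 1. p (x *\<^sub>R y))"
      using x by (subst sphere_scale[of x]) (auto simp: image_image)
    ultimately show "dist (SUP x\<in>sphere (0::'a) r. p x) (SUP x\<in>sphere 0 x. p x) < e"
      using e by (simp add: dist_real_def)
  qed
qed

lemma inf_sphere_cont:
  fixes p :: "'a::euclidean_space \<Rightarrow> real"
  assumes pc: "continuous_on UNIV p"
  shows "continuous_on {0..} (\<lambda>r. INF x\<in>sphere (0::'a) r. p x)"
  unfolding continuous_on_iff
proof (intro ballI allI impI)
  fix x e assume x: "x \<in> {0::real..}" and e: "(e::real) > 0"
  have x0: "x \<ge> 0" using x by simp
  obtain d where d: "d > 0" and dd: "\<And>r. r \<ge> 0 \<Longrightarrow> \<bar>r - x\<bar> < d \<Longrightarrow> (\<forall>y\<in>sphere (0::'a) 1. \<bar>p (r *\<^sub>R y) - p (x *\<^sub>R y)\<bar> \<le> e / 2)"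
    using sphere_close[OF pc x0 half_gt_zero[OF e]] by blast
  show "\<exists>d>0. \<forall>x'\<in>{0..}. dist x' x < d \<longrightarrow> dist (INF x\<in>sphere (0::'a) x'. p x) (INF x\<in>sphere 0 x. p x) < e"
  proof (intro exI[of _ d] conjI ballI impI d)
    fix r assume r: "r \<in> {0::real..}" and rd: "dist r x < d"
    have "\<bar>(INF y\<in>sphere (0::'a) 1. p (r *\<^sub>R y)) - (INF y\<in>sphere 0 1. p (x *\<^sub>R y))\<bar> \<le> e / 2"
      by (rule INF_close[OF _ sphere_bdd(2)[OF pc] sphere_bdd(2)[OF pc]])
         (use dd[of r] r rd in \<open>auto simp: dist_real_def\<close>)
    moreover have "(INF x\<in>sphere (0::'a) r. p x) = (INF y\<in>sphere 0 1. p (r *\<^sub>R y))"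
      using r by (subst sphere_scale[of r]) (auto simp: image_image)
    moreover have "(INF z\<in>sphere (0::'a) x. p z) = (INF y\<in>sphere 0 1. p (x *\<^sub>R y))"
      using x by (subst sphere_scale[of x]) (auto simp: image_image)
    ultimately show "dist (INF x\<in>sphere (0::'a) r. p x) (INF x\<in>sphere 0 x. p x) < e"
      using e by (simp add: dist_real_def)
  qed
qed

lemma inf_le_sup_sphere:
  fixes p :: "'a::euclidean_space \<Rightarrow> real"
  assumes pc: "continuous_on UNIV p" and pn: "\<And>x. p x \<ge> 0" and r: "r \<ge> 0"
  shows "0 \<le> (INF x\<in>sphere (0::'a) r. p x)" "(INF x\<in>sphere (0::'a) r. p x) \<le> (SUP x\<in>sphere (0::'a) r. p x)"
proof -
  have ne: "sphere (0::'a) r \<noteq> {}" using r by simp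
  have "compact (p ` sphere (0::'a) r)" by (rule compact_continuous_image[OF continuous_on_subset[OF pc]]) auto
  then have b: "bounded (p ` sphere (0::'a) r)" by (rule compact_imp_bounded)
  show "0 \<le> (INF x\<in>sphere (0::'a) r. p x)" by (rule cINF_greatest[OF ne pn])
  show "(INF x\<in>sphere (0::'a) r. p x) \<le> (SUP x\<in>sphere (0::'a) r. p x)"
    using ne b by (intro cInf_le_cSup bounded_imp_bdd_above bounded_imp_bdd_below) auto
qed

lemma first_crossing:
  fixes D :: "real \<Rightarrow> real"
  assumes Dc: "continuous_on {0..} D" and D0: "D 0 > 0" and c: "c > 0"
    and step: "\<And>r. r \<ge> 0 \<Longrightarrow> (\<forall>s\<in>{0..r}. D s \<ge> 0) \<Longrightarrow> D r \<ge> c"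
  shows "\<forall>r\<ge>0. D r \<ge> 0"
proof (rule ccontr)
  assume "\<not> (\<forall>r\<ge>0. D r \<ge> 0)"
  define S where "S = {r. r \<ge> 0 \<and> D r < 0}"
  have Sne: "S \<noteq> {}" using \<open>\<not> (\<forall>r\<ge>0. D r \<ge> 0)\<close> unfolding S_def by auto
  have Sb: "bdd_below S" unfolding S_def by (auto intro: bdd_belowI[of _ 0])
  define rs where "rs = Inf S"
  have rs0: "rs \<ge> 0" unfolding rs_def using Sne by (intro cInf_greatest) (auto simp: S_def)
  have below: "D s \<ge> 0" if "0 \<le> s" "s < rs" for s
  proof (rule ccontr)
    assume "\<not> D s \<ge> 0"
    then have "s \<in> S" using that unfolding S_def by auto
    then have "rs \<le> s" unfolding rs_def by (rule cInf_lower[OF _ Sb])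
    then show False using that by simp
  qed
  have Drs: "D rs \<ge> c"
  proof (cases "rs = 0")
    case True
    show ?thesis using step[of 0] D0 True by simp
  next
    case False
    then have rsp: "rs > 0" using rs0 by simp
    have "isCont D rs"
      by (rule continuous_on_interior[OF Dc]) (use rsp in auto)
    then have "(D \<longlongrightarrow> D rs) (at rs)" by (simp add: isCont_def)
    then have lim: "(D \<longlongrightarrow> D rs) (at_left rs)" by (rule filterlim_at_split[THEN iffD1, THEN conjunct1])
    have ev: "eventually (\<lambda>s. c \<le> D s) (at_left rs)"
      unfolding eventually_at_left_field
    proof (intro exI[of _ 0] conjI allI impI)
      show "0 < rs" by (rule rsp)
      fix s assume s: "0 < s" "s < rs"
      show "c \<le> D s" by (rule step) (use s below in auto)
    qed
    show ?thesis by (rule tendsto_lowerbound[OF lim ev]) simp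
  qed
  have "continuous (at rs within {0..}) D" using Dc rs0 by (simp add: continuous_on_eq_continuous_within)
  then obtain d where d: "d > 0" and dd: "\<And>s. s \<in> {0..} \<Longrightarrow> dist s rs < d \<Longrightarrow> dist (D s) (D rs) < c"
    unfolding continuous_within_eps_delta using c by metis
  have "rs + d \<le> rs"
  proof -
    have "rs + d \<le> Inf S"
    proof (rule cInf_greatest[OF Sne])
      fix s assume s: "s \<in> S"
      show "rs + d \<le> s"
      proof (rule ccontr)
        assume "\<not> rs + d \<le> s"
        have s0: "s \<ge> 0" "D s < 0" using s unfolding S_def by auto
        show False
        proof (cases "s < rs")
          case True then show False using below[OF s0(1) True] s0 by simp
        next
          case False
          then have "dist s rs < d" using \<open>\<not> rs + d \<le> s\<close> by (simp add: dist_real_def)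
          then have "dist (D s) (D rs) < c" using dd s0 by simp
          then show False using Drs s0 by (simp add: dist_real_def)
        qed
      qed
    qed
    then show ?thesis unfolding rs_def .
  qed
  then show False using d by simp
qed

theorem lemma1:
  fixes p :: "'a::euclidean_space \<Rightarrow> real" and f :: "real \<Rightarrow> real" and \<alpha> :: real
    and \<phi> \<psi> h \<Psi> :: "real \<Rightarrow> real" and \<Lambda> \<Lambda>N :: real
  assumes dim: "DIM('a) \<ge> 3"
    and alpha: "0 < \<alpha>" "\<alpha> < 1"
    and p_holder: "loc_holder_on \<alpha> UNIV p"
    and p_nonneg: "\<forall>x. p x \<ge> 0"
    and f_nonneg: "\<forall>s\<ge>0. f s \<ge> 0"
    and f_mono: "mono_on {0..} f"
    and f_holder: "loc_holder_on \<alpha> {0..} f"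
    and f0: "f 0 = 0"
    and f_pos: "\<forall>s>0. f s > 0"
    and Lambda_fin: "bdd_above ((\<lambda>s. f s / s) ` {1..})"
    and Lambda_def: "\<Lambda> = (SUP s\<in>{1..}. f s / s)"
    and phi_def: "\<forall>r. \<phi> r = (SUP x\<in>sphere 0 r. p x)"
    and psi_def: "\<forall>r. \<psi> r = (INF x\<in>sphere 0 r. p x)"
    and h_def: "\<forall>r. h r = \<phi> r - \<psi> r"
    and LambdaN_def: "\<Lambda>N = \<Lambda> / (real DIM('a) - 2)"
    and Psi_def: "\<forall>r. \<Psi> r = exp (\<Lambda>N * integral {0..r} (\<lambda>s. s * \<psi> s))"
    and int_fin: "(\<lambda>r. r * h r * \<Psi> r) integrable_on {0..}"
    and int_inf: "filterlim (\<lambda>T. integral {1..T} (\<lambda>t. exp (- t) * t powr (1 - real DIM('a))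
                    * integral {0..t} (\<lambda>s. exp s * s ^ (DIM('a) - 1) * \<psi> s))) at_top at_top"
  shows "\<exists>v w :: 'a \<Rightarrow> real.
           entire_classical_solution \<phi> f v \<and> entire_classical_solution \<psi> f w
         \<and> (\<forall>x. v x > 0) \<and> (\<forall>x. w x > 0) \<and> large v \<and> large w
         \<and> (\<forall>x. v x \<le> w x)"
proof -
  have n3: "DIM('a) \<ge> 3" using dim .
  have pc: "continuous_on UNIV p"
  proof (rule continuous_at_imp_continuous_on, intro ballI)
    fix x :: 'a assume "x \<in> UNIV"
    have "continuous_on (cball x 1) p"
      by (rule holder_cont[OF p_holder alpha(1)]) auto
    then show "isCont p x" by (rule continuous_on_interior) simp
  qed
  have fc: "continuous_on {0..} f"
  proof (rule cont_on_ge0)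
    fix R :: real assume "R > 0"
    show "continuous_on {0..R} f" by (rule holder_cont[OF f_holder alpha(1)]) auto
  qed
  have phi_eq: "\<phi> = (\<lambda>r. SUP x\<in>sphere (0::'a) r. p x)" using phi_def by auto
  have psi_eq: "\<psi> = (\<lambda>r. INF x\<in>sphere (0::'a) r. p x)" using psi_def by auto
  have phic: "continuous_on {0..} \<phi>" unfolding phi_eq by (rule sup_sphere_cont[OF pc])
  have psic: "continuous_on {0..} \<psi>" unfolding psi_eq by (rule inf_sphere_cont[OF pc])
  have psi_nn: "\<And>r. r \<ge> 0 \<Longrightarrow> \<psi> r \<ge> 0"
    unfolding psi_eq using inf_le_sup_sphere(1)[OF pc] p_nonneg by blast
  have psi_le: "\<And>r. r \<ge> 0 \<Longrightarrow> \<psi> r \<le> \<phi> r"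
    unfolding psi_eq phi_eq using inf_le_sup_sphere(2)[OF pc] p_nonneg by blast
  have phi_nn: "\<And>r. r \<ge> 0 \<Longrightarrow> \<phi> r \<ge> 0" using psi_nn psi_le by (meson order_trans)
  have h_eq: "h = (\<lambda>r. \<phi> r - \<psi> r)" using h_def by auto
  have hc: "continuous_on {0..} h" unfolding h_eq by (intro continuous_intros phic psic)
  have h_nn: "\<And>r. r \<ge> 0 \<Longrightarrow> h r \<ge> 0" using psi_le h_def by simp
  have fnn: "\<And>s. s \<ge> 0 \<Longrightarrow> f s \<ge> 0" using f_nonneg by simp
  have flin: "\<And>s. s \<ge> 1 \<Longrightarrow> f s \<le> \<Lambda> * s"
  proof -
    fix s :: real assume s: "s \<ge> 1"
    have "f s / s \<le> \<Lambda>" unfolding Lambda_def by (rule cSUP_upper[OF _ Lambda_fin]) (use s in simp)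
    then show "f s \<le> \<Lambda> * s" using s by (simp add: divide_le_eq)
  qed
  have f1: "f 1 > 0" using f_pos by simp
  have Lam_nn: "\<Lambda> \<ge> 0" using flin[of 1] f1 by simp
  have LN: "\<Lambda>N = \<Lambda> / (real DIM('a) - 2)" by (rule LambdaN_def)
  have LN_nn: "\<Lambda>N \<ge> 0" unfolding LN using Lam_nn n3 by simp
  have spsic: "continuous_on {0..} (\<lambda>s. s * \<psi> s)" by (intro continuous_intros psic)
  have Psi_eq: "\<Psi> = (\<lambda>r. exp (\<Lambda>N * integral {0..r} (\<lambda>s. s * \<psi> s)))" using Psi_def by auto
  have Psic: "continuous_on {0..} \<Psi>"
  proof (rule cont_on_ge0)
    fix R :: real assume "R > 0"
    have "continuous_on {0..R} (\<lambda>r. integral {0..r} (\<lambda>s. s * \<psi> s))"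
      by (rule indefinite_integral_continuous_1[OF integrable_ge0[OF spsic]])
    then show "continuous_on {0..R} \<Psi>" unfolding Psi_eq by (intro continuous_intros)
  qed
  have Psi1: "\<Psi> r \<ge> 1" if r: "r \<ge> 0" for r
  proof -
    have "integral {0..r} (\<lambda>s. s * \<psi> s) \<ge> 0"
      by (rule integral_nonneg[OF integrable_ge0[OF spsic]]) (auto intro!: mult_nonneg_nonneg psi_nn)
    then have "\<Lambda>N * integral {0..r} (\<lambda>s. s * \<psi> s) \<ge> 0" using LN_nn by simp
    then show ?thesis unfolding Psi_eq by simp
  qed
  define I where "I = integral {0..} (\<lambda>r. r * h r * \<Psi> r)"
  have shPc: "continuous_on {0..} (\<lambda>r. r * h r * \<Psi> r)" by (intro continuous_intros hc Psic)
  have shP_nn: "\<And>r. r \<ge> 0 \<Longrightarrow> r * h r * \<Psi> r \<ge> 0"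
    using h_nn Psi1 by (meson mult_nonneg_nonneg order_trans zero_le_one)
  have shP_I: "integral {0..r} (\<lambda>r. r * h r * \<Psi> r) \<le> I" for r
    unfolding I_def
    by (rule integral_subset_le[OF _ integrable_ge0[OF shPc] int_fin]) (auto intro: shP_nn)
  have I_nn: "I \<ge> 0" unfolding I_def by (rule integral_nonneg[OF int_fin]) (auto intro: shP_nn)
  have shc: "continuous_on {0..} (\<lambda>s. s * h s)" by (intro continuous_intros hc)
  have sh_I: "integral {0..r} (\<lambda>s. s * h s) \<le> I" if r: "r \<ge> 0" for r
  proof -
    have "integral {0..r} (\<lambda>s. s * h s) \<le> integral {0..r} (\<lambda>r. r * h r * \<Psi> r)"
    proof (rule integral_le[OF integrable_ge0[OF shc] integrable_ge0[OF shPc]])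
      fix s assume "s \<in> {0..r}"
      then have s: "s \<ge> 0" by simp
      have "s * h s * 1 \<le> s * h s * \<Psi> s"
        by (rule mult_left_mono[OF Psi1[OF s]]) (use s h_nn[OF s] in simp)
      then show "s * h s \<le> s * h s * \<Psi> s" by simp
    qed
    then show ?thesis using shP_I[of r] by linarith
  qed
  define b where "b = 2 + \<Lambda>N * exp (\<Lambda>N * I) * I"
  have b2: "b \<ge> 2" unfolding b_def using LN_nn I_nn by simp
  have odA: "odeP DIM('a) \<phi> f \<Lambda> 1"
  proof (rule odeP.intro)
    show "DIM('a) \<ge> 3" by (rule n3)
    show "continuous_on {0..} \<phi>" by (rule phic)
    show "\<And>s. s \<ge> 0 \<Longrightarrow> \<phi> s \<ge> 0" by (rule phi_nn)
    show "continuous_on {0..} f" by (rule fc)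
    show "mono_on {0..} f" by (rule f_mono)
    show "\<And>s. s \<ge> 0 \<Longrightarrow> f s \<ge> 0" by (rule fnn)
    show "\<And>s. s \<ge> 1 \<Longrightarrow> f s \<le> \<Lambda> * s" by (rule flin)
    show "\<Lambda> \<ge> 0" by (rule Lam_nn)
    show "(1::real) \<ge> 1" by simp
  qed
  have odB: "odeP DIM('a) \<psi> f \<Lambda> b"
  proof (rule odeP.intro)
    show "DIM('a) \<ge> 3" by (rule n3)
    show "continuous_on {0..} \<psi>" by (rule psic)
    show "\<And>s. s \<ge> 0 \<Longrightarrow> \<psi> s \<ge> 0" by (rule psi_nn)
    show "continuous_on {0..} f" by (rule fc)
    show "mono_on {0..} f" by (rule f_mono)
    show "\<And>s. s \<ge> 0 \<Longrightarrow> f s \<ge> 0" by (rule fnn)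
    show "\<And>s. s \<ge> 1 \<Longrightarrow> f s \<le> \<Lambda> * s" by (rule flin)
    show "\<Lambda> \<ge> 0" by (rule Lam_nn)
    show "b \<ge> 1" using b2 by simp
  qed
  interpret A: odeP "DIM('a)" \<phi> f \<Lambda> 1 by (rule odA)
  interpret B: odeP "DIM('a)" \<psi> f \<Lambda> b by (rule odB)
  define v where "v = (\<lambda>x::'a. A.vlim (norm x))"
  define w where "w = (\<lambda>x::'a. B.vlim (norm x))"
  have solv: "entire_classical_solution \<phi> f v"
    unfolding v_def
    by (rule radial_solution[OF A.v_deriv A.vlim_cont A.qf_cont A.qf_deriv[unfolded A.gv_def]
          phic fc A.vlim_nn A.qf_nn A.qf0[unfolded A.gv_def]])
  have solw: "entire_classical_solution \<psi> f w"
    unfolding w_def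
    by (rule radial_solution[OF B.v_deriv B.vlim_cont B.qf_cont B.qf_deriv[unfolded B.gv_def]
          psic fc B.vlim_nn B.qf_nn B.qf0[unfolded B.gv_def]])
  have vpos: "\<forall>x. v x > 0" unfolding v_def using A.vlim_a by (auto intro: less_le_trans[OF zero_less_one])
  have wpos: "\<forall>x. w x > 0" unfolding w_def using B.vlim_a b2 by (auto intro: less_le_trans[of 0 b])
  have Xinf: "filterlim (\<lambda>T. integral {1..T} (Gf DIM('a) \<psi>)) at_top at_top"
  proof -
    have eq: "exp (- t) * t powr (1 - real DIM('a)) * integral {0..t} (\<lambda>s. exp s * s ^ (DIM('a) - 1) * \<psi> s) = Gf DIM('a) \<psi> t"
      if t: "t \<in> {1..T}" for t T
    proof -
      have tp: "t > 0" using t by simp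
      have e1: "1 - real DIM('a) = - real (DIM('a) - 1)" using n3 by (simp add: of_nat_diff)
      have "t powr (1 - real DIM('a)) = t powr (- real (DIM('a) - 1))" unfolding e1 ..
      also have "\<dots> = inverse (t powr real (DIM('a) - 1))" by (rule powr_minus)
      also have "\<dots> = inverse (t ^ (DIM('a) - 1))" by (simp only: powr_realpow[OF tp])
      finally have "t powr (1 - real DIM('a)) = inverse (t ^ (DIM('a) - 1))" .
      then show ?thesis unfolding Gf_def Aint_def mm_def using tp
        by (simp add: exp_minus field_simps)
    qed
    have "(\<lambda>T. integral {1..T} (\<lambda>t. exp (- t) * t powr (1 - real DIM('a)) * integral {0..t} (\<lambda>s. exp s * s ^ (DIM('a) - 1) * \<psi> s)))
        = (\<lambda>T. integral {1..T} (Gf DIM('a) \<psi>))"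
      by (intro ext integral_cong eq)
    then show ?thesis using int_inf by simp
  qed
  have QP: "\<And>s. s \<ge> 0 \<Longrightarrow> 0 \<le> \<psi> s \<and> \<psi> s \<le> \<phi> s" using psi_nn psi_le by blast
  have QQ: "\<And>s. s \<ge> 0 \<Longrightarrow> 0 \<le> \<psi> s \<and> \<psi> s \<le> \<psi> s" using psi_nn by blast
  have fb: "f b > 0" using f_pos b2 by simp
  have largev: "large v"
    unfolding large_def v_def
    by (rule filterlim_compose[OF A.large_lemma[OF psic QP Xinf f1] filterlim_norm_at_top])
  have largew: "large w"
    unfolding large_def w_def
    by (rule filterlim_compose[OF B.large_lemma[OF psic QQ Xinf fb] filterlim_norm_at_top])
  define D where "D r = B.vlim r - A.vlim r" for r
  have Dc: "continuous_on {0..} D" unfolding D_def[abs_def]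
    by (intro continuous_intros A.vlim_cont B.vlim_cont)
  have D0: "D 0 > 0" unfolding D_def using A.v0 B.v0 b2 by simp
  have step: "D r \<ge> 1" if r: "r \<ge> 0" and le: "\<forall>s\<in>{0..r}. D s \<ge> 0" for r
  proof -
    define hv where "hv s = h s * f (A.vlim s)" for s
    have fvc: "continuous_on {0..} (\<lambda>s. f (A.vlim s))"
      by (rule continuous_on_compose2[OF fc A.vlim_cont]) (use A.vlim_nn in auto)
    have hvc: "continuous_on {0..} hv" unfolding hv_def[abs_def] by (intro continuous_intros hc fvc)
    have hv_nn: "\<And>s. s \<ge> 0 \<Longrightarrow> hv s \<ge> 0" unfolding hv_def
      using h_nn fnn A.vlim_nn by (simp add: mult_nonneg_nonneg)
    have gwhv: "continuous_on {0..} (\<lambda>s. B.gv s + hv s)" by (intro continuous_intros B.gv_cont hvc)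
    have Gle: "Gf DIM('a) A.gv t \<le> Gf DIM('a) B.gv t + Gf DIM('a) hv t" if t: "t \<in> {0..r}" for t
    proof -
      have t0: "t \<ge> 0" using t by simp
      have "Aint DIM('a) A.gv t \<le> Aint DIM('a) (\<lambda>s. B.gv s + hv s) t"
        unfolding Aint_def
      proof (rule integral_le)
        show "(\<lambda>s. mm DIM('a) s * A.gv s) integrable_on {0..t}"
          by (rule integrable_ge0) (intro continuous_intros mm_cont A.gv_cont)
        show "(\<lambda>s. mm DIM('a) s * (B.gv s + hv s)) integrable_on {0..t}"
          by (rule integrable_ge0) (intro continuous_intros mm_cont gwhv)
        fix s assume s: "s \<in> {0..t}"
        then have s0: "s \<ge> 0" and sr: "s \<le> r" using t by auto
        have "A.vlim s \<le> B.vlim s" using le s0 sr unfolding D_def by auto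
        then have "f (A.vlim s) \<le> f (B.vlim s)"
          by (intro mono_onD[OF f_mono]) (use A.vlim_nn[OF s0] B.vlim_nn[OF s0] in auto)
        then have "\<psi> s * f (A.vlim s) \<le> \<psi> s * f (B.vlim s)" by (rule mult_left_mono[OF _ psi_nn[OF s0]])
        then have "A.gv s \<le> B.gv s + hv s" unfolding A.gv_def B.gv_def hv_def h_eq by (simp add: algebra_simps)
        then show "mm DIM('a) s * A.gv s \<le> mm DIM('a) s * (B.gv s + hv s)" by (rule mult_left_mono[OF _ mm_nonneg[OF s0]])
      qed
      also have "Aint DIM('a) (\<lambda>s. B.gv s + hv s) t = Aint DIM('a) B.gv t + Aint DIM('a) hv t"
        unfolding Aint_def distrib_left
        by (rule integral_add) (auto intro!: integrable_ge0 continuous_intros mm_cont B.gv_cont hvc)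
      finally have "Aint DIM('a) A.gv t \<le> Aint DIM('a) B.gv t + Aint DIM('a) hv t" .
      then have "Aint DIM('a) A.gv t / mm DIM('a) t \<le> (Aint DIM('a) B.gv t + Aint DIM('a) hv t) / mm DIM('a) t"
        by (rule divide_right_mono[OF _ mm_nonneg[OF t0]])
      then show ?thesis unfolding Gf_def by (simp add: add_divide_distrib)
    qed
    have GAc: "continuous_on {0..} (Gf DIM('a) A.gv)" by (rule A.G_cont)
    have GBc: "continuous_on {0..} (Gf DIM('a) B.gv)" by (rule B.G_cont)
    have Ghc: "continuous_on {0..} (Gf DIM('a) hv)" by (rule Gf_cont[OF A.n2 hvc hv_nn])
    have i1: "integral {0..r} (Gf DIM('a) A.gv) \<le> integral {0..r} (Gf DIM('a) B.gv) + integral {0..r} (Gf DIM('a) hv)"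
    proof -
      have "integral {0..r} (Gf DIM('a) A.gv) \<le> integral {0..r} (\<lambda>t. Gf DIM('a) B.gv t + Gf DIM('a) hv t)"
        by (rule integral_le[OF integrable_ge0[OF GAc]]) (auto intro!: integrable_ge0 continuous_intros GBc Ghc Gle)
      also have "\<dots> = integral {0..r} (Gf DIM('a) B.gv) + integral {0..r} (Gf DIM('a) hv)"
        by (rule integral_add[OF integrable_ge0[OF GBc] integrable_ge0[OF Ghc]])
      finally show ?thesis .
    qed
    have i2: "integral {0..r} (Gf DIM('a) hv) \<le> integral {0..r} (\<lambda>s. s * hv s) / (real DIM('a) - 2)"
      by (rule green[OF n3 hvc hv_nn r])
    have i3: "integral {0..r} (\<lambda>s. s * hv s) \<le> \<Lambda> * exp (\<Lambda>N * I) * I"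
    proof -
      have "integral {0..r} (\<lambda>s. s * hv s) \<le> integral {0..r} (\<lambda>s. \<Lambda> * exp (\<Lambda>N * I) * (s * h s * \<Psi> s))"
      proof (rule integral_le)
        show "(\<lambda>s. s * hv s) integrable_on {0..r}" by (rule integrable_ge0) (intro continuous_intros hvc)
        show "(\<lambda>s. \<Lambda> * exp (\<Lambda>N * I) * (s * h s * \<Psi> s)) integrable_on {0..r}"
          by (rule integrable_ge0) (intro continuous_intros shPc)
        fix s assume "s \<in> {0..r}"
        then have s: "s \<ge> 0" by simp
        have Bd: "A.Bd s \<le> \<Psi> s * exp (\<Lambda>N * I)"
        proof -
          have "integral {0..s} (\<lambda>t. t * \<phi> t) = integral {0..s} (\<lambda>t. t * \<psi> t) + integral {0..s} (\<lambda>t. t * h t)"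
          proof -
            have "integral {0..s} (\<lambda>t. t * \<psi> t + t * h t) = integral {0..s} (\<lambda>t. t * \<psi> t) + integral {0..s} (\<lambda>t. t * h t)"
              by (rule integral_add[OF integrable_ge0[OF spsic] integrable_ge0[OF shc]])
            moreover have "(\<lambda>t. t * \<psi> t + t * h t) = (\<lambda>t. t * \<phi> t)" unfolding h_eq by (auto simp: algebra_simps)
            ultimately show ?thesis by simp
          qed
          then have "\<Lambda>N * integral {0..s} (\<lambda>t. t * \<phi> t) \<le> \<Lambda>N * integral {0..s} (\<lambda>t. t * \<psi> t) + \<Lambda>N * I"
            using sh_I[OF s] LN_nn by (simp add: distrib_left mult_left_mono)
          then have "exp (\<Lambda>N * integral {0..s} (\<lambda>t. t * \<phi> t)) \<le> exp (\<Lambda>N * integral {0..s} (\<lambda>t. t * \<psi> t) + \<Lambda>N * I)"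
            by simp
          then show ?thesis unfolding A.Bd_def Psi_eq LN[symmetric] by (simp add: exp_add)
        qed
        have "f (A.vlim s) \<le> \<Lambda> * A.vlim s" by (rule flin[OF A.vlim_a[OF s]])
        also have "\<dots> \<le> \<Lambda> * (\<Psi> s * exp (\<Lambda>N * I))"
          by (rule mult_left_mono[OF order_trans[OF A.vlim_Bd[OF s] Bd] Lam_nn])
        finally have fv: "f (A.vlim s) \<le> \<Lambda> * (\<Psi> s * exp (\<Lambda>N * I))" .
        have "s * h s \<ge> 0" using s h_nn[OF s] by simp
        then have "s * h s * f (A.vlim s) \<le> s * h s * (\<Lambda> * (\<Psi> s * exp (\<Lambda>N * I)))"
          by (rule mult_left_mono[OF fv])
        then show "s * hv s \<le> \<Lambda> * exp (\<Lambda>N * I) * (s * h s * \<Psi> s)"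
          unfolding hv_def by (simp add: algebra_simps)
      qed
      also have "\<dots> = \<Lambda> * exp (\<Lambda>N * I) * integral {0..r} (\<lambda>s. s * h s * \<Psi> s)"
        by (rule integral_mult_right)
      also have "\<dots> \<le> \<Lambda> * exp (\<Lambda>N * I) * I"
        by (rule mult_left_mono[OF shP_I]) (use Lam_nn in simp)
      finally show ?thesis .
    qed
    have "integral {0..r} (Gf DIM('a) hv) \<le> \<Lambda> * exp (\<Lambda>N * I) * I / (real DIM('a) - 2)"
    proof -
      have c: "real DIM('a) - 2 > 0" using n3 by simp
      show ?thesis by (rule order_trans[OF i2 divide_right_mono[OF i3 less_imp_le[OF c]]])
    qed
    also have "\<dots> = \<Lambda>N * exp (\<Lambda>N * I) * I" unfolding LN by simp
    finally have i4: "integral {0..r} (Gf DIM('a) hv) \<le> \<Lambda>N * exp (\<Lambda>N * I) * I" .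
    have "D r = (b - 1) + integral {0..r} (Gf DIM('a) B.gv) - integral {0..r} (Gf DIM('a) A.gv)"
      unfolding D_def using A.v_rep[OF r] B.v_rep[OF r] by simp
    then show ?thesis using i1 i4 unfolding b_def by linarith
  qed
  have "\<forall>r\<ge>0. D r \<ge> 0" by (rule first_crossing[OF Dc D0 zero_less_one step])
  then have vw: "\<forall>x. v x \<le> w x" unfolding v_def w_def D_def by auto
  show ?thesis using solv solw vpos wpos largev largew vw by blast
qed

end
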